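(* Let $W=e^{-q}$ be the bivariate Freud weight and $\{\mathbb{P}_n\}$ an orthonormal polynomial system for it, with matrices $G^n_k$, $G_n$, $A_{n,i}$, $A_{n,i}^{-1}$, $B_{n,i}$, $C_{n,i}$ as in the context. Then for $i=1,2$: (i) $B_{n,i}=A_{n-1,i}^{-1}G_{n-1}N_{n,i}G_{n-1}^{-1}$ for $n\geqslant1$; (ii) $C_{n,i}^T=A_{n-3,i}A_{n-2,i}A_{n-1,i}G_nK_{n,i}G_n^{-1}$ for $n\geqslant3$; (iii) $C_{n,i}=G^n_{n-2}G_{n-2}^{-1}B_{n-2,i}-B_{n,i}G^{n-1}_{n-3}G_{n-3}^{-1}$ for $n\geqslant3$. Moreover, for $k=0,1,\dots,\lfloor n/2\rfloor$, $$A_{n,i}G^{n+1}_{n-2k+1}+A_{n-1,i}^TG^{n-1}_{n-2k+1}=G^n_{n-2k}L_{n-2k,i}$$ and $$B_{n,i}G^{n-1}_{n-2k-1}+C_{n,i}G^{n-3}_{n-2k-1}=G^n_{n-2k}L_{n-2k-1,i}^TN_{n-2k,i}.$$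
   Context: Parameters $a_{4,0},a_{2,2},a_{0,4}\geqslant0$, $a_{2,0},a_{0,2}\in\mathbb{R}$, $a_{4,0}+a_{2,2}>0$, $a_{2,2}+a_{0,4}>0$; $q(x,y)=a_{4,0}x^4+a_{2,2}x^2y^2+a_{0,4}y^4+a_{2,0}x^2+a_{0,2}y^2$, $W=e^{-q}$, inner product $(f,g)=\iint_{\mathbb{R}^2}fgW\,dx\,dy$ (entrywise on vectors). $\mathbb{X}_n=(x^n,x^{n-1}y,\dots,y^n)^T$. An orthonormal polynomial system: column vectors $\mathbb{P}_n=(P_{n,0},\dots,P_{n,n})^T$ of linearly independent polynomials of exact total degree $n$ with $(\mathbb{P}_n,\mathbb{P}_m^T)=\delta_{nm}I_{n+1}$. Write $\mathbb{P}_n=\sum_{k}G^n_k\mathbb{X}_k$ with constant $(n+1)\times(k+1)$ matrices $G^n_k$, $G_n:=G^n_n$ invertible, and the convention $G^n_m=0$ for $m>n$ or $m<0$ (also $G^n_k=0$ when $n-k$ is odd, by central symmetry). $A_{n,i}$ ($(n+1)\times(n+2)$) are defined by $x\mathbb{P}_n=A_{n,1}\mathbb{P}_{n+1}+A_{n-1,1}^T\mathbb{P}_{n-1}$, $y\mathbb{P}_n=A_{n,2}\mathbb{P}_{n+1}+A_{n-1,2}^T\mathbb{P}_{n-1}$ ($\mathbb{P}_{-1}=0$); $A_{n,i}^{-1}:=G_{n+1}L_{n,i}^TG_n^{-1}$ denotes the right pseudo inverse of $A_{n,i}$. $B_{n,i}$ ($(n+1)\times n$) and $C_{n,i}$ ($(n+1)\times(n-2)$,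 zero for $n\leqslant2$) are the matrices in the structure relations $\partial_x\mathbb{P}_n=B_{n,1}\mathbb{P}_{n-1}+C_{n,1}\mathbb{P}_{n-3}$, $\partial_y\mathbb{P}_n=B_{n,2}\mathbb{P}_{n-1}+C_{n,2}\mathbb{P}_{n-3}$ ($n\geqslant1$), which hold for this weight. $L_{n,1}=(I_{n+1}\,|\,0)$, $L_{n,2}=(0\,|\,I_{n+1})$. $N_{n,1}=\mathrm{diag}(n,\dots,1)$, $N_{n,2}=\mathrm{diag}(1,\dots,n)$. $K_{n,1}$: $(n+1)\times(n+1)$ upper triangular, diagonal $4a_{4,0}$, entries $(j,j+2)$ equal $2a_{2,2}$, others $0$; $K_{n,2}$: lower triangular, diagonal $4a_{0,4}$, entries $(j+2,j)$ equal $2a_{2,2}$, others $0$. *)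

theory Defs
  imports "HOL-Analysis.Analysis" "Jordan_Normal_Form.Matrix"
begin

definition minv :: "real mat \<Rightarrow> real mat" where
  "minv A = (SOME B. B \<in> carrier_mat (dim_row A) (dim_row A) \<and>
                     A * B = 1\<^sub>m (dim_row A) \<and> B * A = 1\<^sub>m (dim_row A))"

definition freud_q :: "real \<Rightarrow> real \<Rightarrow> real \<Rightarrow> real \<Rightarrow> real \<Rightarrow> real \<Rightarrow> real \<Rightarrow> real" where
  "freud_q a40 a22 a04 a20 a02 x y =
     a40 * x^4 + a22 * x^2 * y^2 + a04 * y^4 + a20 * x^2 + a02 * y^2"

definition freud_W :: "real \<Rightarrow> real \<Rightarrow> real \<Rightarrow> real \<Rightarrow> real \<Rightarrow> real \<Rightarrow> real \<Rightarrow> real" where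
  "freud_W a40 a22 a04 a20 a02 x y = exp (- freud_q a40 a22 a04 a20 a02 x y)"

text \<open>Coefficient matrices G n k = G^n_k ((n+1) x (k+1)), extended to integer indices with
  the convention G^n_m = 0 for m > n or m < 0 (or n < 0); the zero matrix then has
  dimensions (n+1) x (m+1), truncated at 0.\<close>
definition Gz :: "(nat \<Rightarrow> nat \<Rightarrow> real mat) \<Rightarrow> int \<Rightarrow> int \<Rightarrow> real mat" where
  "Gz G n k = (if 0 \<le> k \<and> k \<le> n then G (nat n) (nat k)
               else 0\<^sub>m (nat (n + 1)) (nat (k + 1)))"

text \<open>The j-th entry of \<P>_n at (x,y):  sum_{k<=n} (G^n_k X_k)_j,
  where X_k = (x^k, x^(k-1) y, ..., y^k).\<close>
definition Pent :: "(nat \<Rightarrow> nat \<Rightarrow> real mat) \<Rightarrow> nat \<Rightarrow> nat \<Rightarrow> real \<Rightarrow> real \<Rightarrow> real" where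
  "Pent G n j x y = (\<Sum>k\<le>n. \<Sum>l\<le>k. G n k $$ (j, l) * x ^ (k - l) * y ^ l)"

definition Pz :: "(nat \<Rightarrow> nat \<Rightarrow> real mat) \<Rightarrow> int \<Rightarrow> real \<Rightarrow> real \<Rightarrow> real vec" where
  "Pz G n x y = (if n < 0 then vec 0 (\<lambda>_. 0) else vec (nat n + 1) (\<lambda>j. Pent G (nat n) j x y))"

definition Az :: "(nat \<Rightarrow> nat \<Rightarrow> real mat) \<Rightarrow> nat \<Rightarrow> int \<Rightarrow> real mat" where
  "Az A i n = (if n < 0 then 0\<^sub>m (nat (n + 1)) (nat (n + 2)) else A i (nat n))"

definition Lm :: "nat \<Rightarrow> int \<Rightarrow> real mat" where
  "Lm i n = mat (nat (n + 1)) (nat (n + 2))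
     (\<lambda>(r, c). if (i = 1 \<and> c = r) \<or> (i = 2 \<and> c = r + 1) then 1 else 0)"

definition Nm :: "nat \<Rightarrow> nat \<Rightarrow> real mat" where
  "Nm i n = mat n n (\<lambda>(r, c). if r = c then (if i = 1 then real (n - r) else real (r + 1)) else 0)"

definition Km :: "real \<Rightarrow> real \<Rightarrow> real \<Rightarrow> nat \<Rightarrow> nat \<Rightarrow> real mat" where
  "Km a40 a22 a04 i n = mat (n + 1) (n + 1) (\<lambda>(r, c).
     if i = 1 then (if c = r then 4 * a40 else if c = r + 2 then 2 * a22 else 0)
     else (if r = c then 4 * a04 else if r = c + 2 then 2 * a22 else 0))"

text \<open>Right pseudo inverse A_{n,i}^{-1} := G_{n+1} L_{n,i}^T G_n^{-1}.\<close>
definition Ainv :: "(nat \<Rightarrow> nat \<Rightarrow> real mat) \<Rightarrow> nat \<Rightarrow> nat \<Rightarrow> real mat" where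
  "Ainv G i n = G (n + 1) (n + 1) * transpose_mat (Lm i (int n)) * minv (G n n)"

definition pdx :: "(real \<Rightarrow> real \<Rightarrow> real) \<Rightarrow> real \<Rightarrow> real \<Rightarrow> real" where
  "pdx f x y = deriv (\<lambda>t. f t y) x"
definition pdy :: "(real \<Rightarrow> real \<Rightarrow> real) \<Rightarrow> real \<Rightarrow> real \<Rightarrow> real" where
  "pdy f x y = deriv (\<lambda>t. f x t) y"

definition ip :: "(real \<Rightarrow> real \<Rightarrow> real) \<Rightarrow> (real \<Rightarrow> real \<Rightarrow> real) \<Rightarrow> (real \<Rightarrow> real \<Rightarrow> real) \<Rightarrow> real" where
  "ip W f g = integral\<^sup>L (lborel :: (real \<times> real) measure) (\<lambda>(x, y). f x y * g x y * W x y)"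

end

theory Submission
  imports Defs
begin



lemma lim_zero_top:
  fixes F :: "real \<Rightarrow> real"
  assumes iF: "integrable lborel F" and lim: "(F \<longlongrightarrow> L) at_top"
  shows "L = 0"
proof (rule ccontr)
  assume L: "L \<noteq> 0"
  have "((\<lambda>x. \<bar>F x\<bar>) \<longlongrightarrow> \<bar>L\<bar>) at_top" using lim by (rule tendsto_rabs)
  moreover have "\<bar>L\<bar>/2 < \<bar>L\<bar>" using L by simp
  ultimately have "eventually (\<lambda>x. \<bar>L\<bar>/2 < \<bar>F x\<bar>) at_top" by (rule order_tendstoD)
  then obtain M where M: "\<And>x. x \<ge> M \<Longrightarrow> \<bar>L\<bar>/2 < \<bar>F x\<bar>" by (auto simp: eventually_at_top_linorder)
  define I where "I = integral\<^sup>L lborel (\<lambda>x. \<bar>F x\<bar>)"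
  define T where "T = 2 * (\<bar>I\<bar> + 1) / \<bar>L\<bar>"
  have Tpos: "T \<ge> 0" using L by (simp add: T_def)
  have "integral\<^sup>L lborel (\<lambda>x. indicator {M..M+T} x * (\<bar>L\<bar>/2)) \<le> integral\<^sup>L lborel (\<lambda>x. \<bar>F x\<bar>)"
  proof (rule integral_mono)
    show "integrable lborel (\<lambda>x. indicator {M..M+T} x * (\<bar>L\<bar>/2))"
      by (intro integrable_mult_left) (simp add: integrable_indicator_iff emeasure_lborel_Icc_eq)
    show "integrable lborel (\<lambda>x. \<bar>F x\<bar>)" using iF by (rule integrable_abs)
    fix x show "indicator {M..M+T} x * (\<bar>L\<bar>/2) \<le> \<bar>F x\<bar>"
      using M[of x] by (auto split: split_indicator)
  qed
  moreover have "integral\<^sup>L lborel (\<lambda>x. indicator {M..M+T} x * (\<bar>L\<bar>/2)) = T * (\<bar>L\<bar>/2)"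
    using Tpos by (simp add: measure_lborel_Icc)
  moreover have "T * (\<bar>L\<bar>/2) = \<bar>I\<bar> + 1" using L by (simp add: T_def)
  ultimately show False unfolding I_def by linarith
qed

lemma lim_zero_bot:
  fixes F :: "real \<Rightarrow> real"
  assumes iF: "integrable lborel F" and lim: "(F \<longlongrightarrow> L) at_bot"
  shows "L = 0"
proof (rule ccontr)
  assume L: "L \<noteq> 0"
  have "((\<lambda>x. \<bar>F x\<bar>) \<longlongrightarrow> \<bar>L\<bar>) at_bot" using lim by (rule tendsto_rabs)
  moreover have "\<bar>L\<bar>/2 < \<bar>L\<bar>" using L by simp
  ultimately have "eventually (\<lambda>x. \<bar>L\<bar>/2 < \<bar>F x\<bar>) at_bot" by (rule order_tendstoD)
  then obtain M where M: "\<And>x. x \<le> M \<Longrightarrow> \<bar>L\<bar>/2 < \<bar>F x\<bar>" by (auto simp: eventually_at_bot_linorder)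
  define I where "I = integral\<^sup>L lborel (\<lambda>x. \<bar>F x\<bar>)"
  define T where "T = 2 * (\<bar>I\<bar> + 1) / \<bar>L\<bar>"
  have Tpos: "T \<ge> 0" using L by (simp add: T_def)
  have "integral\<^sup>L lborel (\<lambda>x. indicator {M-T..M} x * (\<bar>L\<bar>/2)) \<le> integral\<^sup>L lborel (\<lambda>x. \<bar>F x\<bar>)"
  proof (rule integral_mono)
    show "integrable lborel (\<lambda>x. indicator {M-T..M} x * (\<bar>L\<bar>/2))"
      by (intro integrable_mult_left) (simp add: integrable_indicator_iff emeasure_lborel_Icc_eq)
    show "integrable lborel (\<lambda>x. \<bar>F x\<bar>)" using iF by (rule integrable_abs)
    fix x show "indicator {M-T..M} x * (\<bar>L\<bar>/2) \<le> \<bar>F x\<bar>"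
      using M[of x] by (auto split: split_indicator)
  qed
  moreover have "integral\<^sup>L lborel (\<lambda>x. indicator {M-T..M} x * (\<bar>L\<bar>/2)) = T * (\<bar>L\<bar>/2)"
    using Tpos by (simp add: measure_lborel_Icc)
  moreover have "T * (\<bar>L\<bar>/2) = \<bar>I\<bar> + 1" using L by (simp add: T_def)
  ultimately show False unfolding I_def by linarith
qed

lemma ibp1:
  fixes F f :: "real \<Rightarrow> real"
  assumes der: "\<And>x. (F has_real_derivative f x) (at x)"
    and cont: "continuous_on UNIV f"
    and iF: "integrable lborel F" and iff: "integrable lborel f"
  shows "integral\<^sup>L lborel f = 0"
proof -
  have FTC: "set_lebesgue_integral lborel {a..b} f = F b - F a" if "a \<le> b" for a b
    unfolding set_lebesgue_integral_def
  proof (rule integral_FTC_atLeastAtMost[OF that])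
    fix x show "(F has_vector_derivative f x) (at x within {a..b})"
      using der[of x] unfolding has_real_derivative_iff_has_vector_derivative
      by (rule has_vector_derivative_at_within)
  next
    show "continuous_on {a..b} f" using cont by (rule continuous_on_subset) auto
  qed
  have si: "set_integrable lborel A f" if "A \<in> sets lborel" for A
    unfolding set_integrable_def using integrable_mult_indicator[OF that iff] .
  have top: "((\<lambda>b. set_lebesgue_integral lborel {0..b} f) \<longlongrightarrow> set_lebesgue_integral lborel {0..} f) at_top"
    by (rule tendsto_set_lebesgue_integral_at_top) (auto intro: si)
  have "((\<lambda>b. F 0 + set_lebesgue_integral lborel {0..b} f) \<longlongrightarrow> F 0 + set_lebesgue_integral lborel {0..} f) at_top"
    by (intro tendsto_add top tendsto_const)
  moreover have ev: "eventually (\<lambda>b. F 0 + set_lebesgue_integral lborel {0..b} f = F b) at_top"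
    using eventually_ge_at_top[of "0::real"] by eventually_elim (simp add: FTC)
  ultimately have "(F \<longlongrightarrow> F 0 + set_lebesgue_integral lborel {0..} f) at_top"
    using tendsto_cong[OF ev] by simp
  then have 1: "F 0 + set_lebesgue_integral lborel {0..} f = 0" by (rule lim_zero_top[OF iF])
  have bot: "((\<lambda>a. set_lebesgue_integral lborel {a..0} f) \<longlongrightarrow> set_lebesgue_integral lborel {..0} f) at_bot"
    by (rule tendsto_set_lebesgue_integral_at_bot) (auto intro: si)
  have "((\<lambda>a. F 0 - set_lebesgue_integral lborel {a..0} f) \<longlongrightarrow> F 0 - set_lebesgue_integral lborel {..0} f) at_bot"
    by (intro tendsto_diff bot tendsto_const)
  moreover have ev2: "eventually (\<lambda>a. F 0 - set_lebesgue_integral lborel {a..0} f = F a) at_bot"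
    using eventually_le_at_bot[of "0::real"] by eventually_elim (simp add: FTC)
  ultimately have "(F \<longlongrightarrow> F 0 - set_lebesgue_integral lborel {..0} f) at_bot"
    using tendsto_cong[OF ev2] by simp
  then have 2: "F 0 - set_lebesgue_integral lborel {..0} f = 0" by (rule lim_zero_bot[OF iF])
  have "integral\<^sup>L lborel f = integral\<^sup>L lborel (\<lambda>x. indicator {..0} x *\<^sub>R f x + indicator {0..} x *\<^sub>R f x)"
  proof (rule integral_cong_AE)
    show "AE x in lborel. f x = indicator {..0} x *\<^sub>R f x + indicator {0..} x *\<^sub>R f x"
      using AE_lborel_singleton[of "0::real"] by eventually_elim (auto split: split_indicator)
  qed (use iff in auto)
  also have "\<dots> = set_lebesgue_integral lborel {..0} f + set_lebesgue_integral lborel {0..} f"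
    unfolding set_lebesgue_integral_def
    using si[of "{..0}", simplified] si[of "{0..}", simplified] unfolding set_integrable_def
    by (rule Bochner_Integration.integral_add)
  finally show ?thesis using 1 2 by linarith
qed

definition mom :: "(real \<Rightarrow> real \<Rightarrow> real) \<Rightarrow> nat \<Rightarrow> nat \<Rightarrow> real" where
  "mom W p r = integral\<^sup>L (lborel :: (real \<times> real) measure) (\<lambda>(x, y). x ^ p * y ^ r * W x y)"

lemma pair_lborel: "pair_sigma_finite (lborel :: real measure) (lborel :: real measure)"
  unfolding pair_sigma_finite_def using lborel.sigma_finite_measure_axioms by simp

lemma ibp2:
  fixes g :: "real \<Rightarrow> real \<Rightarrow> real" and F :: "real \<Rightarrow> real \<Rightarrow> real"
  assumes ig: "integrable (lborel :: (real \<times> real) measure) (\<lambda>(x, y). g x y)"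
    and iF: "integrable (lborel :: (real \<times> real) measure) (\<lambda>(x, y). F x y)"
    and der: "\<And>x y. ((\<lambda>t. F t y) has_real_derivative g x y) (at x)"
    and cont: "\<And>y. continuous_on UNIV (\<lambda>x. g x y)"
  shows "integral\<^sup>L (lborel :: (real \<times> real) measure) (\<lambda>(x, y). g x y) = 0"
proof -
  interpret P: pair_sigma_finite "lborel :: real measure" "lborel :: real measure" by (rule pair_lborel)
  have ig': "integrable (lborel \<Otimes>\<^sub>M lborel) (\<lambda>(x, y). g x y)" using ig by (simp add: lborel_prod)
  have iF': "integrable (lborel \<Otimes>\<^sub>M lborel) (\<lambda>(x, y). F x y)" using iF by (simp add: lborel_prod)
  have "AE y in lborel. integrable lborel (\<lambda>x. g x y)" by (rule pair_sigma_finite.AE_integrable_snd[OF pair_lborel ig'])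
  moreover have "AE y in lborel. integrable lborel (\<lambda>x. F x y)" by (rule pair_sigma_finite.AE_integrable_snd[OF pair_lborel iF'])
  ultimately have "AE y in lborel. integral\<^sup>L lborel (\<lambda>x. g x y) = 0"
  proof eventually_elim
    case (elim y)
    show ?case by (rule ibp1[where F="\<lambda>t. F t y"]) (use elim der cont in auto)
  qed
  then have "integral\<^sup>L lborel (\<lambda>y. integral\<^sup>L lborel (\<lambda>x. g x y)) = 0"
    by (rule integral_eq_zero_AE)
  then have "integral\<^sup>L (lborel \<Otimes>\<^sub>M lborel) (\<lambda>(x, y). g x y) = 0"
    using pair_sigma_finite.integral_snd[OF pair_lborel, OF ig'] by simp
  then show ?thesis by (simp add: lborel_prod)
qed

lemma ibp2y:
  fixes g :: "real \<Rightarrow> real \<Rightarrow> real" and F :: "real \<Rightarrow> real \<Rightarrow> real"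
  assumes ig: "integrable (lborel :: (real \<times> real) measure) (\<lambda>(x, y). g x y)"
    and iF: "integrable (lborel :: (real \<times> real) measure) (\<lambda>(x, y). F x y)"
    and der: "\<And>x y. ((\<lambda>t. F x t) has_real_derivative g x y) (at y)"
    and cont: "\<And>x. continuous_on UNIV (\<lambda>y. g x y)"
  shows "integral\<^sup>L (lborel :: (real \<times> real) measure) (\<lambda>(x, y). g x y) = 0"
proof -
  interpret P: pair_sigma_finite "lborel :: real measure" "lborel :: real measure" by (rule pair_lborel)
  have ig': "integrable (lborel \<Otimes>\<^sub>M lborel) (\<lambda>(x, y). g x y)" using ig by (simp add: lborel_prod)
  have iF': "integrable (lborel \<Otimes>\<^sub>M lborel) (\<lambda>(x, y). F x y)" using iF by (simp add: lborel_prod)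
  have "AE x in lborel. integrable lborel (\<lambda>y. g x y)" by (rule pair_sigma_finite.AE_integrable_fst[OF pair_lborel ig'])
  moreover have "AE x in lborel. integrable lborel (\<lambda>y. F x y)" by (rule pair_sigma_finite.AE_integrable_fst[OF pair_lborel iF'])
  ultimately have "AE x in lborel. integral\<^sup>L lborel (\<lambda>y. g x y) = 0"
  proof eventually_elim
    case (elim x)
    show ?case by (rule ibp1[where F="\<lambda>t. F x t"]) (use elim der cont in auto)
  qed
  then have "integral\<^sup>L lborel (\<lambda>x. integral\<^sup>L lborel (\<lambda>y. g x y)) = 0"
    by (rule integral_eq_zero_AE)
  then have "integral\<^sup>L (lborel \<Otimes>\<^sub>M lborel) (\<lambda>(x, y). g x y) = 0"
    using pair_sigma_finite.integral_fst[OF pair_lborel, OF ig'] by simp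
  then show ?thesis by (simp add: lborel_prod)
qed

lemma momsum:
  fixes W :: "real \<Rightarrow> real \<Rightarrow> real" and c :: "'i \<Rightarrow> real"
  assumes fin: "finite I"
    and int: "\<And>p r. integrable (lborel :: (real \<times> real) measure) (\<lambda>(x, y). x ^ p * y ^ r * W x y)"
  shows "integrable (lborel :: (real \<times> real) measure) (\<lambda>(x, y). \<Sum>i\<in>I. c i * (x ^ p i * y ^ r i * W x y))"
    and "integral\<^sup>L (lborel :: (real \<times> real) measure) (\<lambda>(x, y). \<Sum>i\<in>I. c i * (x ^ p i * y ^ r i * W x y))
         = (\<Sum>i\<in>I. c i * mom W (p i) (r i))"
proof -
  have eq: "(\<lambda>(x, y). \<Sum>i\<in>I. c i * (x ^ p i * y ^ r i * W x y)) = (\<lambda>z. \<Sum>i\<in>I. c i * ((\<lambda>(x, y). x ^ p i * y ^ r i * W x y) z))"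
    by (auto simp: case_prod_beta)
  have ii: "\<And>i. integrable (lborel :: (real \<times> real) measure) (\<lambda>z. c i * ((\<lambda>(x, y). x ^ p i * y ^ r i * W x y) z))"
    by (intro integrable_mult_right int)
  show "integrable (lborel :: (real \<times> real) measure) (\<lambda>(x, y). \<Sum>i\<in>I. c i * (x ^ p i * y ^ r i * W x y))"
    unfolding eq by (rule Bochner_Integration.integrable_sum) (rule ii)
  show "integral\<^sup>L (lborel :: (real \<times> real) measure) (\<lambda>(x, y). \<Sum>i\<in>I. c i * (x ^ p i * y ^ r i * W x y))
         = (\<Sum>i\<in>I. c i * mom W (p i) (r i))"
    unfolding eq by (subst Bochner_Integration.integral_sum) (auto intro: ii int simp: mom_def)
qed

lemma mom_ibp_x:
  fixes a40 a22 a04 a20 a02 :: real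
  defines "W \<equiv> freud_W a40 a22 a04 a20 a02"
  assumes int: "\<And>p r. integrable (lborel :: (real \<times> real) measure) (\<lambda>(x, y). x ^ p * y ^ r * W x y)"
  shows "real a * mom W (a - 1) b = 4 * a40 * mom W (a + 3) b + 2 * a22 * mom W (a + 1) (b + 2) + 2 * a20 * mom W (a + 1) b"
proof -
  define c :: "nat \<Rightarrow> real" where "c = (\<lambda>i. [real a, - 4 * a40, - 2 * a22, - 2 * a20] ! i)"
  define p :: "nat \<Rightarrow> nat" where "p = (\<lambda>i. [a - 1, a + 3, a + 1, a + 1] ! i)"
  define r :: "nat \<Rightarrow> nat" where "r = (\<lambda>i. [b, b, b + 2, b] ! i)"
  define g where "g = (\<lambda>x y. \<Sum>i<4. c i * (x ^ p i * y ^ r i * W x y))"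
  have ig: "integrable (lborel :: (real \<times> real) measure) (\<lambda>(x, y). g x y)"
    unfolding g_def by (rule momsum(1)) (auto intro: int)
  have Ig: "integral\<^sup>L (lborel :: (real \<times> real) measure) (\<lambda>(x, y). g x y) = (\<Sum>i<4. c i * mom W (p i) (r i))"
    unfolding g_def by (rule momsum(2)) (auto intro: int)
  have der: "((\<lambda>t. t ^ a * y ^ b * W t y) has_real_derivative g x y) (at x)" for x y
  proof -
    have "((\<lambda>t. t ^ a * y ^ b * W t y) has_real_derivative
       real a * x ^ (a - 1) * y ^ b * W x y + x ^ a * y ^ b * (W x y * (- (4 * a40 * x ^ 3 + 2 * a22 * x * y ^ 2 + 2 * a20 * x)))) (at x)"
      unfolding W_def freud_W_def freud_q_def
      by (auto intro!: derivative_eq_intros simp: algebra_simps)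
    moreover have "real a * x ^ (a - 1) * y ^ b * W x y + x ^ a * y ^ b * (W x y * (- (4 * a40 * x ^ 3 + 2 * a22 * x * y ^ 2 + 2 * a20 * x))) = g x y"
      unfolding g_def c_def p_def r_def
      by (simp add: eval_nat_numeral algebra_simps power_add)
    ultimately show ?thesis by simp
  qed
  have cont: "continuous_on UNIV (\<lambda>x. g x y)" for y
    unfolding g_def W_def freud_W_def freud_q_def by (intro continuous_intros)
  have "integral\<^sup>L (lborel :: (real \<times> real) measure) (\<lambda>(x, y). g x y) = 0"
    by (rule ibp2[OF ig int der cont])
  then show ?thesis unfolding Ig c_def p_def r_def by (simp add: eval_nat_numeral)
qed

lemma mom_ibp_y:
  fixes a40 a22 a04 a20 a02 :: real
  defines "W \<equiv> freud_W a40 a22 a04 a20 a02"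
  assumes int: "\<And>p r. integrable (lborel :: (real \<times> real) measure) (\<lambda>(x, y). x ^ p * y ^ r * W x y)"
  shows "real b * mom W a (b - 1) = 4 * a04 * mom W a (b + 3) + 2 * a22 * mom W (a + 2) (b + 1) + 2 * a02 * mom W a (b + 1)"
proof -
  define c :: "nat \<Rightarrow> real" where "c = (\<lambda>i. [real b, - 4 * a04, - 2 * a22, - 2 * a02] ! i)"
  define p :: "nat \<Rightarrow> nat" where "p = (\<lambda>i. [a, a, a + 2, a] ! i)"
  define r :: "nat \<Rightarrow> nat" where "r = (\<lambda>i. [b - 1, b + 3, b + 1, b + 1] ! i)"
  define g where "g = (\<lambda>x y. \<Sum>i<4. c i * (x ^ p i * y ^ r i * W x y))"
  have ig: "integrable (lborel :: (real \<times> real) measure) (\<lambda>(x, y). g x y)"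
    unfolding g_def by (rule momsum(1)) (auto intro: int)
  have Ig: "integral\<^sup>L (lborel :: (real \<times> real) measure) (\<lambda>(x, y). g x y) = (\<Sum>i<4. c i * mom W (p i) (r i))"
    unfolding g_def by (rule momsum(2)) (auto intro: int)
  have der: "((\<lambda>t. x ^ a * t ^ b * W x t) has_real_derivative g x y) (at y)" for x y
  proof -
    have "((\<lambda>t. x ^ a * t ^ b * W x t) has_real_derivative
       x ^ a * (real b * y ^ (b - 1)) * W x y + x ^ a * y ^ b * (W x y * (- (4 * a04 * y ^ 3 + 2 * a22 * x ^ 2 * y + 2 * a02 * y)))) (at y)"
      unfolding W_def freud_W_def freud_q_def
      by (auto intro!: derivative_eq_intros simp: algebra_simps)
    moreover have "x ^ a * (real b * y ^ (b - 1)) * W x y + x ^ a * y ^ b * (W x y * (- (4 * a04 * y ^ 3 + 2 * a22 * x ^ 2 * y + 2 * a02 * y))) = g x y"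
      unfolding g_def c_def p_def r_def
      by (simp add: eval_nat_numeral algebra_simps power_add)
    ultimately show ?thesis by simp
  qed
  have cont: "continuous_on UNIV (\<lambda>y. g x y)" for x
    unfolding g_def W_def freud_W_def freud_q_def by (intro continuous_intros)
  have "integral\<^sup>L (lborel :: (real \<times> real) measure) (\<lambda>(x, y). g x y) = 0"
    by (rule ibp2y[OF ig int der cont])
  then show ?thesis unfolding Ig c_def p_def r_def by (simp add: eval_nat_numeral)
qed




definition tri :: "nat \<Rightarrow> (nat \<Rightarrow> nat \<Rightarrow> real) \<Rightarrow> real \<Rightarrow> real \<Rightarrow> real" where
  "tri N c x y = (\<Sum>k\<le>N. \<Sum>l\<le>k. c k l * x ^ (k - l) * y ^ l)"

definition trunc :: "nat \<Rightarrow> (nat \<Rightarrow> nat \<Rightarrow> real) \<Rightarrow> nat \<Rightarrow> nat \<Rightarrow> real" where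
  "trunc N c k l = (if k \<le> N then c k l else 0)"

lemma Pent_tri: "Pent G n j = tri n (\<lambda>k l. G n k $$ (j, l))"
  by (simp add: Pent_def tri_def fun_eq_iff)

lemma tri_trunc: "N \<le> M \<Longrightarrow> tri M (trunc N c) x y = tri N c x y"
proof -
  assume NM: "N \<le> M"
  have "tri M (trunc N c) x y = (\<Sum>k\<le>N. \<Sum>l\<le>k. trunc N c k l * x ^ (k - l) * y ^ l)"
    unfolding tri_def using NM by (intro sum.mono_neutral_right) (auto simp: trunc_def)
  also have "\<dots> = tri N c x y" unfolding tri_def by (intro sum.cong) (auto simp: trunc_def)
  finally show ?thesis .
qed

lemma tri_lin: "finite I \<Longrightarrow> tri N (\<lambda>k l. \<Sum>i\<in>I. w i * c i k l) x y = (\<Sum>i\<in>I. w i * tri N (c i) x y)"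
  unfolding tri_def by (simp add: sum_distrib_left sum_distrib_right sum.swap[of _ I] mult.assoc)

lemma tri_add: "tri N (\<lambda>k l. c k l + d k l) x y = tri N c x y + tri N d x y"
  unfolding tri_def by (simp add: algebra_simps sum.distrib)

lemma tri_uniq:
  assumes z: "\<And>x y. tri N c x y = 0" and k: "k \<le> N" and l: "l \<le> k"
  shows "c k l = 0"
proof -
  define h where "h k x = (\<Sum>l\<le>k. c k l * x ^ (k - l))" for k x
  have "\<forall>t. (\<Sum>k\<le>N. h k x * t ^ k) = 0" for x
  proof
    fix t
    have "(\<Sum>k\<le>N. h k x * t ^ k) = tri N c (t * x) t"
      unfolding tri_def h_def sum_distrib_right
    proof (intro sum.cong refl)
      fix k l assume "k \<in> {..N}" "l \<in> {..k}"
      then have "t ^ k = t ^ (k - l) * t ^ l" by (simp add: power_add[symmetric])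
      then show "c k l * x ^ (k - l) * t ^ k = c k l * (t * x) ^ (k - l) * t ^ l"
        by (simp add: power_mult_distrib algebra_simps)
    qed
    then show "(\<Sum>k\<le>N. h k x * t ^ k) = 0" using z by simp
  qed
  then have hz: "h k x = 0" for x using k polyfun_eq_0[of "\<lambda>k. h k x" N] by (simp add: mult.commute)
  have "h k x = (\<Sum>i\<le>k. c k (k - i) * x ^ i)" for x
  proof -
    have "h k x = (\<Sum>i<Suc k. c k (Suc k - Suc i) * x ^ (k - (Suc k - Suc i)))"
      unfolding h_def atMost_atLeast0 using sum.nat_diff_reindex[of "\<lambda>l. c k l * x ^ (k - l)" "Suc k"]
      by (simp add: lessThan_Suc_atMost atLeast0AtMost)
    also have "\<dots> = (\<Sum>i\<le>k. c k (k - i) * x ^ i)"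
      by (intro sum.cong) (auto simp: lessThan_Suc_atMost)
    finally show ?thesis .
  qed
  then have "\<forall>x. (\<Sum>i\<le>k. c k (k - i) * x ^ i) = 0" using hz by simp
  then have all: "\<forall>i\<le>k. c k (k - i) = 0" using polyfun_eq_0[of "\<lambda>i. c k (k - i)" k] by auto
  show ?thesis using all[rule_format, of "k - l"] l by simp
qed

definition shx :: "(nat \<Rightarrow> nat \<Rightarrow> real) \<Rightarrow> nat \<Rightarrow> nat \<Rightarrow> real" where
  "shx c k l = (if 0 < k \<and> l < k then c (k - 1) l else 0)"
definition shy :: "(nat \<Rightarrow> nat \<Rightarrow> real) \<Rightarrow> nat \<Rightarrow> nat \<Rightarrow> real" where
  "shy c k l = (if 0 < l \<and> l \<le> k then c (k - 1) (l - 1) else 0)"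

lemma tri_x: "x * tri N c x y = tri (Suc N) (shx c) x y"
proof -
  have "tri (Suc N) (shx c) x y = (\<Sum>k\<le>N. \<Sum>l\<le>Suc k. shx c (Suc k) l * x ^ (Suc k - l) * y ^ l)"
    unfolding tri_def by (subst sum.atMost_Suc_shift) (simp add: shx_def)
  also have "\<dots> = (\<Sum>k\<le>N. \<Sum>l\<le>k. c k l * x ^ (Suc k - l) * y ^ l)"
    by (rule sum.cong[OF refl]) (simp add: shx_def)
  also have "\<dots> = x * tri N c x y" unfolding tri_def sum_distrib_left
    by (intro sum.cong refl) (simp add: Suc_diff_le)
  finally show ?thesis by simp
qed

lemma tri_y: "y * tri N c x y = tri (Suc N) (shy c) x y"
proof -
  have "tri (Suc N) (shy c) x y = (\<Sum>k\<le>N. \<Sum>l\<le>Suc k. shy c (Suc k) l * x ^ (Suc k - l) * y ^ l)"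
    unfolding tri_def by (subst sum.atMost_Suc_shift) (simp add: shy_def)
  also have "\<dots> = (\<Sum>k\<le>N. \<Sum>l\<le>k. c k l * x ^ (k - l) * y ^ Suc l)"
    by (rule sum.cong[OF refl]) (simp add: shy_def sum.atMost_Suc_shift del: sum.atMost_Suc)
  also have "\<dots> = y * tri N c x y" unfolding tri_def sum_distrib_left
    by (intro sum.cong refl) simp
  finally show ?thesis by simp
qed

definition rawdx :: "nat \<Rightarrow> (nat \<Rightarrow> nat \<Rightarrow> real) \<Rightarrow> real \<Rightarrow> real \<Rightarrow> real" where
  "rawdx N c x y = (\<Sum>k\<le>N. \<Sum>l\<le>k. c k l * (real (k - l) * x ^ (k - l - 1)) * y ^ l)"
definition rawdy :: "nat \<Rightarrow> (nat \<Rightarrow> nat \<Rightarrow> real) \<Rightarrow> real \<Rightarrow> real \<Rightarrow> real" where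
  "rawdy N c x y = (\<Sum>k\<le>N. \<Sum>l\<le>k. c k l * x ^ (k - l) * (real l * y ^ (l - 1)))"

lemma pdx_tri: "pdx (tri N c) x y = rawdx N c x y"
proof -
  have "((\<lambda>t. tri N c t y) has_real_derivative rawdx N c x y) (at x)"
    unfolding tri_def rawdx_def by (intro DERIV_sum) (auto intro!: derivative_eq_intros)
  then show ?thesis unfolding pdx_def by (rule DERIV_imp_deriv)
qed

lemma pdy_tri: "pdy (tri N c) x y = rawdy N c x y"
proof -
  have "((\<lambda>t. tri N c x t) has_real_derivative rawdy N c x y) (at y)"
    unfolding tri_def rawdy_def by (intro DERIV_sum) (auto intro!: derivative_eq_intros)
  then show ?thesis unfolding pdy_def by (rule DERIV_imp_deriv)
qed

definition dxc :: "(nat \<Rightarrow> nat \<Rightarrow> real) \<Rightarrow> nat \<Rightarrow> nat \<Rightarrow> real" where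
  "dxc c k l = real (Suc k - l) * c (Suc k) l"
definition dyc :: "(nat \<Rightarrow> nat \<Rightarrow> real) \<Rightarrow> nat \<Rightarrow> nat \<Rightarrow> real" where
  "dyc c k l = real (Suc l) * c (Suc k) (Suc l)"

lemma rawdx_tri: "rawdx N c x y = tri N (dxc (trunc N c)) x y"
proof (cases N)
  case 0 then show ?thesis by (simp add: rawdx_def tri_def dxc_def trunc_def)
next
  case (Suc M)
  have "rawdx N c x y = (\<Sum>k\<le>M. \<Sum>l\<le>Suc k. c (Suc k) l * (real (Suc k - l) * x ^ (Suc k - l - 1)) * y ^ l)"
    unfolding rawdx_def Suc by (subst sum.atMost_Suc_shift) simp
  also have "\<dots> = (\<Sum>k\<le>M. \<Sum>l\<le>k. dxc (trunc N c) k l * x ^ (k - l) * y ^ l)"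
    by (rule sum.cong[OF refl]) (auto simp: dxc_def trunc_def Suc Suc_diff_le algebra_simps intro!: sum.cong)
  also have "\<dots> = tri N (dxc (trunc N c)) x y"
    unfolding tri_def Suc by (simp add: dxc_def trunc_def)
  finally show ?thesis .
qed

lemma rawdy_tri: "rawdy N c x y = tri N (dyc (trunc N c)) x y"
proof (cases N)
  case 0 then show ?thesis by (simp add: rawdy_def tri_def dyc_def trunc_def)
next
  case (Suc M)
  have "rawdy N c x y = (\<Sum>k\<le>M. \<Sum>l\<le>Suc k. c (Suc k) l * x ^ (Suc k - l) * (real l * y ^ (l - 1)))"
    unfolding rawdy_def Suc by (subst sum.atMost_Suc_shift) simp
  also have "\<dots> = (\<Sum>k\<le>M. \<Sum>l\<le>k. dyc (trunc N c) k l * x ^ (k - l) * y ^ l)"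
    apply (rule sum.cong[OF refl])
    apply (subst sum.atMost_Suc_shift)
    apply (auto simp: dyc_def trunc_def Suc algebra_simps intro!: sum.cong)
    done
  also have "\<dots> = tri N (dyc (trunc N c)) x y"
    unfolding tri_def Suc by (simp add: dyc_def trunc_def)
  finally show ?thesis .
qed




definition gp :: "'i set \<Rightarrow> ('i \<Rightarrow> real) \<Rightarrow> ('i \<Rightarrow> nat) \<Rightarrow> ('i \<Rightarrow> nat) \<Rightarrow> real \<Rightarrow> real \<Rightarrow> real" where
  "gp I u p r x y = (\<Sum>i\<in>I. u i * (x ^ p i * y ^ r i))"

lemma tri_gp: "tri N c = gp (Sigma {..N} atMost) (\<lambda>(k, l). c k l) (\<lambda>(k, l). k - l) snd"
  unfolding tri_def gp_def fun_eq_iff by (auto simp: sum.Sigma intro!: sum.cong)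

lemma rawdx_gp: "rawdx N c = gp (Sigma {..N} atMost) (\<lambda>(k, l). c k l * real (k - l)) (\<lambda>(k, l). k - l - 1) snd"
  unfolding rawdx_def gp_def fun_eq_iff by (auto simp: sum.Sigma intro!: sum.cong)

lemma rawdy_gp: "rawdy N c = gp (Sigma {..N} atMost) (\<lambda>(k, l). c k l * real l) (\<lambda>(k, l). k - l) (\<lambda>(k, l). l - 1)"
  unfolding rawdy_def gp_def fun_eq_iff by (auto simp: sum.Sigma intro!: sum.cong)

lemma mono_gp: "(\<lambda>x y. x ^ p * y ^ r) = gp {()} (\<lambda>_. 1) (\<lambda>_. p) (\<lambda>_. r)"
  unfolding gp_def by simp

locale mw =
  fixes W :: "real \<Rightarrow> real \<Rightarrow> real"
  assumes int: "\<And>p r. integrable (lborel :: (real \<times> real) measure) (\<lambda>(x, y). x ^ p * y ^ r * W x y)"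
begin

lemma gp_prod:
  assumes "finite I" "finite J"
  shows "(\<lambda>(x, y). gp I u p r x y * gp J v p' r' x y * W x y)
       = (\<lambda>(x, y). \<Sum>ij\<in>I \<times> J. (u (fst ij) * v (snd ij)) * (x ^ (p (fst ij) + p' (snd ij)) * y ^ (r (fst ij) + r' (snd ij)) * W x y))"
proof -
  have "gp I u p r x y * gp J v p' r' x y * W x y = (\<Sum>i\<in>I. \<Sum>j\<in>J. (u i * v j) * (x ^ (p i + p' j) * y ^ (r i + r' j) * W x y))" for x y
    unfolding gp_def sum_product unfolding sum_distrib_right by (intro sum.cong refl) (simp add: power_add algebra_simps)
  also have "\<dots> x y = (\<Sum>ij\<in>I \<times> J. (u (fst ij) * v (snd ij)) * (x ^ (p (fst ij) + p' (snd ij)) * y ^ (r (fst ij) + r' (snd ij)) * W x y))" for x y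
    by (simp add: sum.cartesian_product case_prod_beta)
  finally show ?thesis by (simp add: fun_eq_iff)
qed

lemma int_gp:
  assumes "finite I" "finite J"
  shows "integrable (lborel :: (real \<times> real) measure) (\<lambda>(x, y). gp I u p r x y * gp J v p' r' x y * W x y)"
  unfolding gp_prod[OF assms] by (rule momsum(1)) (use assms int in auto)

lemma ip_gp:
  assumes "finite I" "finite J"
  shows "ip W (gp I u p r) (gp J v p' r') = (\<Sum>i\<in>I. \<Sum>j\<in>J. u i * v j * mom W (p i + p' j) (r i + r' j))"
proof -
  have "ip W (gp I u p r) (gp J v p' r') = (\<Sum>ij\<in>I \<times> J. (u (fst ij) * v (snd ij)) * mom W (p (fst ij) + p' (snd ij)) (r (fst ij) + r' (snd ij)))"
    unfolding ip_def gp_prod[OF assms] by (rule momsum(2)) (use assms int in auto)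
  also have "\<dots> = (\<Sum>i\<in>I. \<Sum>j\<in>J. u i * v j * mom W (p i + p' j) (r i + r' j))"
    by (simp add: sum.cartesian_product case_prod_beta)
  finally show ?thesis .
qed

lemma ip_gp_right:
  assumes "finite I" "finite J"
  shows "ip W (gp I u p r) (gp J v p' r') = (\<Sum>j\<in>J. v j * ip W (gp I u p r) (\<lambda>x y. x ^ p' j * y ^ r' j))"
  unfolding mono_gp ip_gp[OF assms] by (subst ip_gp) (use assms in \<open>auto simp: sum.swap[of _ I] sum_distrib_left algebra_simps\<close>)

lemma ip_cong: "(\<And>x y. f x y = f' x y) \<Longrightarrow> (\<And>x y. g x y = g' x y) \<Longrightarrow> ip W f g = ip W f' g'"
  unfolding ip_def by (simp add: fun_eq_iff)

lemma ip_sum_left: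
  assumes "finite C" and "\<And>c. c \<in> C \<Longrightarrow> integrable (lborel :: (real \<times> real) measure) (\<lambda>(x, y). f c x y * g x y * W x y)"
  shows "ip W (\<lambda>x y. \<Sum>c\<in>C. w c * f c x y) g = (\<Sum>c\<in>C. w c * ip W (f c) g)"
proof -
  have eq: "(\<lambda>(x, y). (\<Sum>c\<in>C. w c * f c x y) * g x y * W x y) = (\<lambda>z. \<Sum>c\<in>C. w c * (\<lambda>(x, y). f c x y * g x y * W x y) z)"
    unfolding sum_distrib_right sum_distrib_left by (auto simp: fun_eq_iff mult_ac intro!: sum.cong)
  have "ip W (\<lambda>x y. \<Sum>c\<in>C. w c * f c x y) g = integral\<^sup>L lborel (\<lambda>z. \<Sum>c\<in>C. w c * (\<lambda>(x, y). f c x y * g x y * W x y) z)"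
    unfolding ip_def eq ..
  also have "\<dots> = (\<Sum>c\<in>C. integral\<^sup>L lborel (\<lambda>z. w c * (\<lambda>(x, y). f c x y * g x y * W x y) z))"
    by (rule Bochner_Integration.integral_sum) (intro integrable_mult_right assms(2))
  also have "\<dots> = (\<Sum>c\<in>C. w c * ip W (f c) g)" unfolding ip_def by simp
  finally show ?thesis .
qed

lemma ip_add_left:
  assumes "integrable (lborel :: (real \<times> real) measure) (\<lambda>(x, y). f x y * h x y * W x y)"
    and "integrable (lborel :: (real \<times> real) measure) (\<lambda>(x, y). g x y * h x y * W x y)"
  shows "ip W (\<lambda>x y. f x y + g x y) h = ip W f h + ip W g h"
proof -
  have eq: "(\<lambda>(x, y). (f x y + g x y) * h x y * W x y) = (\<lambda>z. (\<lambda>(x, y). f x y * h x y * W x y) z + (\<lambda>(x, y). g x y * h x y * W x y) z)"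
    by (auto simp: fun_eq_iff algebra_simps)
  show ?thesis unfolding ip_def eq by (rule Bochner_Integration.integral_add) (use assms in auto)
qed

lemma int_tri: "integrable (lborel :: (real \<times> real) measure) (\<lambda>(x, y). tri N c x y * tri M d x y * W x y)"
  unfolding tri_gp by (rule int_gp) auto

end




lemma minv_props:
  assumes inv: "invertible_mat A" and A: "A \<in> carrier_mat n n"
  shows "minv A \<in> carrier_mat n n" "A * minv A = 1\<^sub>m n" "minv A * A = 1\<^sub>m n"
proof -
  from inv obtain B where AB: "A * B = 1\<^sub>m (dim_row A)" and BA: "B * A = 1\<^sub>m (dim_row B)"
    unfolding invertible_mat_def inverts_mat_def by blast
  have "dim_col B = n" using arg_cong[OF AB, of dim_col] A by simp
  moreover have "dim_row B = n" using arg_cong[OF BA, of dim_col] A by simp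
  ultimately have B: "B \<in> carrier_mat n n" by auto
  have ex: "\<exists>B. B \<in> carrier_mat (dim_row A) (dim_row A) \<and> A * B = 1\<^sub>m (dim_row A) \<and> B * A = 1\<^sub>m (dim_row A)"
    using B AB BA A by auto
  have "minv A \<in> carrier_mat (dim_row A) (dim_row A) \<and> A * minv A = 1\<^sub>m (dim_row A) \<and> minv A * A = 1\<^sub>m (dim_row A)"
    unfolding minv_def by (rule someI_ex[OF ex])
  then show "minv A \<in> carrier_mat n n" "A * minv A = 1\<^sub>m n" "minv A * A = 1\<^sub>m n" using A by auto
qed

lemma minv_mult_vec:
  assumes inv: "invertible_mat A" and A: "A \<in> carrier_mat n n" and v: "v \<in> carrier_vec n"
  shows "minv A *\<^sub>v (A *\<^sub>v v) = v"
proof -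
  have "minv A *\<^sub>v (A *\<^sub>v v) = (minv A * A) *\<^sub>v v"
    using minv_props[OF inv A] A v by (subst assoc_mult_mat_vec) auto
  also have "\<dots> = v" using minv_props[OF inv A] v by simp
  finally show ?thesis .
qed

lemma mult_unit_vec_index:
  fixes A :: "real mat"
  assumes "A \<in> carrier_mat m n" "i < m" "j < n"
  shows "(A *\<^sub>v unit_vec n j) $ i = A $$ (i, j)"
proof -
  have "(A *\<^sub>v unit_vec n j) $ i = (\<Sum>k\<in>{0..<n}. A $$ (i, k) * (if k = j then 1 else 0))"
    using assms by (simp add: scalar_prod_def)
  also have "\<dots> = A $$ (i, j)" using assms(3) by (simp add: if_distrib cong: if_cong)
  finally show ?thesis .
qed

locale ops = mw W for W +
  fixes G :: "nat \<Rightarrow> nat \<Rightarrow> real mat"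
  assumes G_dim: "\<And>n k. k \<le> n \<Longrightarrow> G n k \<in> carrier_mat (n + 1) (k + 1)"
    and G_inv: "\<And>n. invertible_mat (G n n)"
    and orth: "\<And>n m j l. j \<le> n \<Longrightarrow> l \<le> m \<Longrightarrow>
         ip W (Pent G n j) (Pent G m l) = (if n = m \<and> j = l then 1 else 0)"
begin

definition Phi :: "nat \<Rightarrow> nat \<Rightarrow> nat \<Rightarrow> nat \<Rightarrow> real" where
  "Phi n j p r = ip W (Pent G n j) (\<lambda>x y. x ^ p * y ^ r)"

lemma ip_Pent_tri: "ip W (Pent G n j) (tri N c) = (\<Sum>k\<le>N. \<Sum>l\<le>k. c k l * Phi n j (k - l) l)"
  unfolding Phi_def Pent_tri tri_gp
  by (subst ip_gp_right) (auto simp: sum.Sigma case_prod_beta)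

lemma Phi_expand: "ip W (Pent G n j) (Pent G m c) = (\<Sum>k\<le>m. \<Sum>l\<le>k. G m k $$ (c, l) * Phi n j (k - l) l)"
  by (subst (2) Pent_tri) (rule ip_Pent_tri)

lemma Phi_top_sum:
  assumes low: "\<And>k l. k < d \<Longrightarrow> l \<le> k \<Longrightarrow> Phi n j (k - l) l = 0"
  shows "ip W (Pent G n j) (Pent G d c) = (\<Sum>l\<le>d. G d d $$ (c, l) * Phi n j (d - l) l)"
proof -
  have "ip W (Pent G n j) (Pent G d c) = (\<Sum>k\<in>insert d {..<d}. \<Sum>l\<le>k. G d k $$ (c, l) * Phi n j (k - l) l)"
    unfolding Phi_expand by (simp add: lessThan_Suc_atMost[symmetric])
  also have "\<dots> = (\<Sum>l\<le>d. G d d $$ (c, l) * Phi n j (d - l) l)"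
    by (simp add: low)
  finally show ?thesis .
qed

lemma G_mult_vec_index:
  assumes "c \<le> d"
  shows "(G d d *\<^sub>v vec (d + 1) f) $ c = (\<Sum>l\<le>d. G d d $$ (c, l) * f l)"
  using G_dim[of d d] assms by (simp add: scalar_prod_def atLeast0LessThan lessThan_Suc_atMost[symmetric])

lemma orth_low: "d < n \<Longrightarrow> j \<le> n \<Longrightarrow> l \<le> d \<Longrightarrow> Phi n j (d - l) l = 0"
proof (induction d arbitrary: l rule: less_induct)
  case (less d)
  define \<phi> where "\<phi> = vec (d + 1) (\<lambda>l. Phi n j (d - l) l)"
  have Gphi: "G d d *\<^sub>v \<phi> = 0\<^sub>v (d + 1)"
  proof (rule eq_vecI)
    show "dim_vec (G d d *\<^sub>v \<phi>) = dim_vec (0\<^sub>v (d + 1) :: real vec)" using G_dim[of d d] by simp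
    fix c assume c: "c < dim_vec (0\<^sub>v (d + 1) :: real vec)"
    have "(G d d *\<^sub>v \<phi>) $ c = (\<Sum>l\<le>d. G d d $$ (c, l) * Phi n j (d - l) l)"
      unfolding \<phi>_def using c by (subst G_mult_vec_index) auto
    also have "\<dots> = ip W (Pent G n j) (Pent G d c)"
      by (rule Phi_top_sum[symmetric]) (use less in auto)
    also have "\<dots> = 0" using orth[of j n c d] less c by auto
    finally show "(G d d *\<^sub>v \<phi>) $ c = 0\<^sub>v (d + 1) $ c" using c by simp
  qed
  have "\<phi> = minv (G d d) *\<^sub>v (G d d *\<^sub>v \<phi>)"
    by (rule minv_mult_vec[symmetric, OF G_inv G_dim]) (auto simp: \<phi>_def)
  also have "\<dots> = 0\<^sub>v (d + 1)" unfolding Gphi using minv_props(1)[OF G_inv G_dim[of d d]] by auto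
  finally have "\<phi> $ l = 0" using less by simp
  then show ?case using less by (simp add: \<phi>_def)
qed

lemma Phi_zero: "p + r < n \<Longrightarrow> j \<le> n \<Longrightarrow> Phi n j p r = 0"
  using orth_low[of "p + r" n j r] by simp

lemma Phi_top: assumes "p + r = n" "j \<le> n" shows "Phi n j p r = minv (G n n) $$ (r, j)"
proof -
  define \<phi> where "\<phi> = vec (n + 1) (\<lambda>l. Phi n j (n - l) l)"
  have Gphi: "G n n *\<^sub>v \<phi> = unit_vec (n + 1) j"
  proof (rule eq_vecI)
    show "dim_vec (G n n *\<^sub>v \<phi>) = dim_vec (unit_vec (n + 1) j :: real vec)" using G_dim[of n n] by simp
    fix c assume c: "c < dim_vec (unit_vec (n + 1) j :: real vec)"
    have "(G n n *\<^sub>v \<phi>) $ c = (\<Sum>l\<le>n. G n n $$ (c, l) * Phi n j (n - l) l)"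
      unfolding \<phi>_def using c by (subst G_mult_vec_index) auto
    also have "\<dots> = ip W (Pent G n j) (Pent G n c)"
      by (rule Phi_top_sum[symmetric]) (use orth_low assms in auto)
    also have "\<dots> = (if c = j then 1 else 0)" using orth[of j n c n] assms c by auto
    finally show "(G n n *\<^sub>v \<phi>) $ c = unit_vec (n + 1) j $ c" using c assms by simp
  qed
  have "\<phi> = minv (G n n) *\<^sub>v (G n n *\<^sub>v \<phi>)"
    by (rule minv_mult_vec[symmetric, OF G_inv G_dim]) (auto simp: \<phi>_def)
  also have "\<dots> = minv (G n n) *\<^sub>v unit_vec (n + 1) j" unfolding Gphi ..
  finally have "\<phi> $ r = (minv (G n n) *\<^sub>v unit_vec (n + 1) j) $ r" by simp
  also have "\<dots> = minv (G n n) $$ (r, j)"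
    by (rule mult_unit_vec_index[OF minv_props(1)[OF G_inv G_dim]]) (use assms in auto)
  finally have "Phi n j (n - r) r = minv (G n n) $$ (r, j)" using assms by (simp add: \<phi>_def)
  moreover have "n - r = p" using assms(1) by simp
  ultimately show ?thesis by simp
qed

end




locale ops2 = ops W G for W G +
  fixes a40 a22 a04 a20 a02 :: real
  assumes ibpx: "\<And>a b. real a * mom W (a - 1) b = 4 * a40 * mom W (a + 3) b + 2 * a22 * mom W (a + 1) (b + 2) + 2 * a20 * mom W (a + 1) b"
    and ibpy: "\<And>a b. real b * mom W a (b - 1) = 4 * a04 * mom W a (b + 3) + 2 * a22 * mom W (a + 2) (b + 1) + 2 * a02 * mom W a (b + 1)"
begin

lemma ibp_pt_x:
  "real p * mom W (p - 1 + p') R = 4 * a40 * mom W (p + p' + 3) R + 2 * a22 * mom W (p + p' + 1) (R + 2)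
     + 2 * a20 * mom W (p + p' + 1) R - real p' * mom W (p + (p' - 1)) R"
proof -
  have e: "real (p + p') * mom W (p + p' - 1) R = 4 * a40 * mom W (p + p' + 3) R + 2 * a22 * mom W (p + p' + 1) (R + 2) + 2 * a20 * mom W (p + p' + 1) R"
    by (rule ibpx)
  show ?thesis
  proof (cases "p = 0")
    case True then show ?thesis using e by simp
  next
    case False
    then have "p - 1 + p' = p + p' - 1" by simp
    moreover have "p' = 0 \<or> p + (p' - 1) = p + p' - 1" by auto
    ultimately show ?thesis using e by (auto simp: algebra_simps)
  qed
qed

lemma ibp_pt_y:
  "real r * mom W P (r - 1 + r') = 4 * a04 * mom W P (r + r' + 3) + 2 * a22 * mom W (P + 2) (r + r' + 1)
     + 2 * a02 * mom W P (r + r' + 1) - real r' * mom W P (r + (r' - 1))"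
proof -
  have e: "real (r + r') * mom W P (r + r' - 1) = 4 * a04 * mom W P (r + r' + 3) + 2 * a22 * mom W (P + 2) (r + r' + 1) + 2 * a02 * mom W P (r + r' + 1)"
    by (rule ibpy)
  show ?thesis
  proof (cases "r = 0")
    case True then show ?thesis using e by simp
  next
    case False
    then have "r - 1 + r' = r + r' - 1" by simp
    moreover have "r' = 0 \<or> r + (r' - 1) = r + r' - 1" by auto
    ultimately show ?thesis using e by (auto simp: algebra_simps)
  qed
qed

definition Psi :: "'i set \<Rightarrow> ('i \<Rightarrow> real) \<Rightarrow> ('i \<Rightarrow> nat) \<Rightarrow> ('i \<Rightarrow> nat) \<Rightarrow> nat \<Rightarrow> nat \<Rightarrow> real" where
  "Psi I u p r p0 r0 = (\<Sum>i\<in>I. u i * mom W (p i + p0) (r i + r0))"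

lemma ibp_sum_x:
  fixes u :: "'i \<Rightarrow> real" and v :: "'j \<Rightarrow> real"
  assumes I: "finite I" and J: "finite J"
  shows "(\<Sum>i\<in>I. \<Sum>j\<in>J. (u i * real (p i)) * v j * mom W (p i - 1 + p' j) (r i + r' j))
    = (\<Sum>j\<in>J. v j * (4 * a40 * Psi I u p r (p' j + 3) (r' j) + 2 * a22 * Psi I u p r (p' j + 1) (r' j + 2)
        + 2 * a20 * Psi I u p r (p' j + 1) (r' j) - real (p' j) * Psi I u p r (p' j - 1) (r' j)))"
proof -
  have "(\<Sum>i\<in>I. \<Sum>j\<in>J. (u i * real (p i)) * v j * mom W (p i - 1 + p' j) (r i + r' j))
      = (\<Sum>j\<in>J. \<Sum>i\<in>I. u i * v j * (real (p i) * mom W (p i - 1 + p' j) (r i + r' j)))"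
    by (subst sum.swap) (simp add: algebra_simps)
  also have "\<dots> = (\<Sum>j\<in>J. \<Sum>i\<in>I. u i * v j * (4 * a40 * mom W (p i + p' j + 3) (r i + r' j) + 2 * a22 * mom W (p i + p' j + 1) (r i + r' j + 2)
     + 2 * a20 * mom W (p i + p' j + 1) (r i + r' j) - real (p' j) * mom W (p i + (p' j - 1)) (r i + r' j)))"
    by (subst ibp_pt_x) (rule refl)
  also have "\<dots> = (\<Sum>j\<in>J. v j * (4 * a40 * Psi I u p r (p' j + 3) (r' j) + 2 * a22 * Psi I u p r (p' j + 1) (r' j + 2)
        + 2 * a20 * Psi I u p r (p' j + 1) (r' j) - real (p' j) * Psi I u p r (p' j - 1) (r' j)))"
    unfolding Psi_def
    by (intro sum.cong refl) (simp add: sum_distrib_left sum_subtractf sum.distrib algebra_simps)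
  finally show ?thesis .
qed

lemma ibp_sum_y:
  fixes u :: "'i \<Rightarrow> real" and v :: "'j \<Rightarrow> real"
  assumes I: "finite I" and J: "finite J"
  shows "(\<Sum>i\<in>I. \<Sum>j\<in>J. (u i * real (r i)) * v j * mom W (p i + p' j) (r i - 1 + r' j))
    = (\<Sum>j\<in>J. v j * (4 * a04 * Psi I u p r (p' j) (r' j + 3) + 2 * a22 * Psi I u p r (p' j + 2) (r' j + 1)
        + 2 * a02 * Psi I u p r (p' j) (r' j + 1) - real (r' j) * Psi I u p r (p' j) (r' j - 1)))"
proof -
  have "(\<Sum>i\<in>I. \<Sum>j\<in>J. (u i * real (r i)) * v j * mom W (p i + p' j) (r i - 1 + r' j))
      = (\<Sum>j\<in>J. \<Sum>i\<in>I. u i * v j * (real (r i) * mom W (p i + p' j) (r i - 1 + r' j)))"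
    by (subst sum.swap) (simp add: algebra_simps)
  also have "\<dots> = (\<Sum>j\<in>J. \<Sum>i\<in>I. u i * v j * (4 * a04 * mom W (p i + p' j) (r i + r' j + 3) + 2 * a22 * mom W (p i + p' j + 2) (r i + r' j + 1)
     + 2 * a02 * mom W (p i + p' j) (r i + r' j + 1) - real (r' j) * mom W (p i + p' j) (r i + (r' j - 1))))"
    by (subst ibp_pt_y) (rule refl)
  also have "\<dots> = (\<Sum>j\<in>J. v j * (4 * a04 * Psi I u p r (p' j) (r' j + 3) + 2 * a22 * Psi I u p r (p' j + 2) (r' j + 1)
        + 2 * a02 * Psi I u p r (p' j) (r' j + 1) - real (r' j) * Psi I u p r (p' j) (r' j - 1)))"
    unfolding Psi_def
    by (intro sum.cong refl) (simp add: sum_distrib_left sum_subtractf sum.distrib algebra_simps)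
  finally show ?thesis .
qed

lemma Psi_Phi: "Psi (Sigma {..n} atMost) (\<lambda>(k, l). G n k $$ (j, l)) (\<lambda>(k, l). k - l) snd p0 r0 = Phi n j p0 r0"
  unfolding Phi_def Pent_tri tri_gp mono_gp Psi_def
  by (subst ip_gp) auto

lemma int_Pent: "integrable (lborel :: (real \<times> real) measure) (\<lambda>(x, y). Pent G a b x y * Pent G m c x y * W x y)"
  unfolding Pent_tri by (rule int_tri)

lemma int_sum_left:
  assumes "finite C" "\<And>c. c \<in> C \<Longrightarrow> integrable (lborel :: (real \<times> real) measure) (\<lambda>(x, y). f c x y * g x y * W x y)"
  shows "integrable (lborel :: (real \<times> real) measure) (\<lambda>(x, y). (\<Sum>c\<in>C. w c * f c x y) * g x y * W x y)"
proof -
  have eq: "(\<lambda>(x, y). (\<Sum>c\<in>C. w c * f c x y) * g x y * W x y) = (\<lambda>z. \<Sum>c\<in>C. w c * (\<lambda>(x, y). f c x y * g x y * W x y) z)"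
    unfolding sum_distrib_right sum_distrib_left by (auto simp: fun_eq_iff mult_ac intro!: sum.cong)
  show ?thesis unfolding eq
    by (rule Bochner_Integration.integrable_sum) (intro integrable_mult_right assms(2))
qed

lemma ip_struct:
  assumes n3: "3 \<le> n" and c: "c \<le> n - 3"
    and sx: "\<And>x y. D x y = (\<Sum>c'<n. Bm c' * Pent G (n - 1) c' x y) + (\<Sum>c'<n - 2. Cm c' * Pent G (n - 3) c' x y)"
  shows "ip W D (Pent G (n - 3) c) = Cm c"
proof -
  have "ip W D (Pent G (n - 3) c) = ip W (\<lambda>x y. (\<Sum>c'<n. Bm c' * Pent G (n - 1) c' x y) + (\<Sum>c'<n - 2. Cm c' * Pent G (n - 3) c' x y)) (Pent G (n - 3) c)"
    by (rule ip_cong) (simp_all add: sx)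
  also have "\<dots> = ip W (\<lambda>x y. \<Sum>c'<n. Bm c' * Pent G (n - 1) c' x y) (Pent G (n - 3) c) + ip W (\<lambda>x y. \<Sum>c'<n - 2. Cm c' * Pent G (n - 3) c' x y) (Pent G (n - 3) c)"
    by (rule ip_add_left) (auto intro!: int_sum_left int_Pent)
  also have "ip W (\<lambda>x y. \<Sum>c'<n. Bm c' * Pent G (n - 1) c' x y) (Pent G (n - 3) c) = (\<Sum>c'<n. Bm c' * ip W (Pent G (n - 1) c') (Pent G (n - 3) c))"
    by (rule ip_sum_left) (auto intro: int_Pent)
  also have "\<dots> = 0" using n3 c by (intro sum.neutral) (auto simp: orth)
  also have "ip W (\<lambda>x y. \<Sum>c'<n - 2. Cm c' * Pent G (n - 3) c' x y) (Pent G (n - 3) c) = (\<Sum>c'<n - 2. Cm c' * ip W (Pent G (n - 3) c') (Pent G (n - 3) c))"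
    by (rule ip_sum_left) (auto intro: int_Pent)
  also have "\<dots> = (\<Sum>c'<n - 2. Cm c' * (if c' = c then 1 else 0))"
    using c by (intro sum.cong refl) (auto simp: orth)
  also have "\<dots> = Cm c" using n3 c by (simp add: if_distrib cong: if_cong)
  finally show ?thesis by simp
qed

lemma ip_dx_Pent:
  "ip W (pdx (Pent G n j)) (Pent G m c) = (\<Sum>kl\<in>Sigma {..m} atMost. G m (fst kl) $$ (c, snd kl) *
      (4 * a40 * Phi n j (fst kl - snd kl + 3) (snd kl) + 2 * a22 * Phi n j (fst kl - snd kl + 1) (snd kl + 2)
       + 2 * a20 * Phi n j (fst kl - snd kl + 1) (snd kl) - real (fst kl - snd kl) * Phi n j (fst kl - snd kl - 1) (snd kl)))"
proof -
  define I where "I = Sigma {..n} atMost"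
  define J where "J = Sigma {..m} atMost"
  define u where "u = (\<lambda>kl. G n (fst kl) $$ (j, snd kl))"
  define v where "v = (\<lambda>kl. G m (fst kl) $$ (c, snd kl))"
  define p :: "nat \<times> nat \<Rightarrow> nat" where "p = (\<lambda>kl. fst kl - snd kl)"
  have fI: "finite I" "finite J" unfolding I_def J_def by auto
  have "pdx (Pent G n j) = rawdx n (\<lambda>k l. G n k $$ (j, l))"
    by (simp add: fun_eq_iff Pent_tri pdx_tri)
  also have "\<dots> = gp I (\<lambda>i. u i * real (p i)) (\<lambda>i. p i - 1) snd"
    unfolding rawdx_gp I_def u_def p_def by (simp add: case_prod_beta')
  finally have d: "pdx (Pent G n j) = gp I (\<lambda>i. u i * real (p i)) (\<lambda>i. p i - 1) snd" .
  have P: "Pent G m c = gp J v p snd"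
    unfolding Pent_tri tri_gp J_def v_def p_def by (simp add: case_prod_beta')
  have "ip W (pdx (Pent G n j)) (Pent G m c) = (\<Sum>i\<in>I. \<Sum>j\<in>J. (u i * real (p i)) * v j * mom W (p i - 1 + p j) (snd i + snd j))"
    unfolding d P by (rule ip_gp[OF fI])
  also have "\<dots> = (\<Sum>j\<in>J. v j * (4 * a40 * Psi I u p snd (p j + 3) (snd j) + 2 * a22 * Psi I u p snd (p j + 1) (snd j + 2)
        + 2 * a20 * Psi I u p snd (p j + 1) (snd j) - real (p j) * Psi I u p snd (p j - 1) (snd j)))"
    by (rule ibp_sum_x[OF fI])
  also have "Psi I u p snd = Phi n j"
    using Psi_Phi[of n j] unfolding I_def u_def p_def by (simp add: case_prod_beta' fun_eq_iff)
  finally show ?thesis unfolding J_def v_def p_def .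
qed

lemma ip_dy_Pent:
  "ip W (pdy (Pent G n j)) (Pent G m c) = (\<Sum>kl\<in>Sigma {..m} atMost. G m (fst kl) $$ (c, snd kl) *
      (4 * a04 * Phi n j (fst kl - snd kl) (snd kl + 3) + 2 * a22 * Phi n j (fst kl - snd kl + 2) (snd kl + 1)
       + 2 * a02 * Phi n j (fst kl - snd kl) (snd kl + 1) - real (snd kl) * Phi n j (fst kl - snd kl) (snd kl - 1)))"
proof -
  define I where "I = Sigma {..n} atMost"
  define J where "J = Sigma {..m} atMost"
  define u where "u = (\<lambda>kl. G n (fst kl) $$ (j, snd kl))"
  define v where "v = (\<lambda>kl. G m (fst kl) $$ (c, snd kl))"
  define p :: "nat \<times> nat \<Rightarrow> nat" where "p = (\<lambda>kl. fst kl - snd kl)"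
  have fI: "finite I" "finite J" unfolding I_def J_def by auto
  have "pdy (Pent G n j) = rawdy n (\<lambda>k l. G n k $$ (j, l))"
    by (simp add: fun_eq_iff Pent_tri pdy_tri)
  also have "\<dots> = gp I (\<lambda>i. u i * real (snd i)) p (\<lambda>i. snd i - 1)"
    unfolding rawdy_gp I_def u_def p_def by (simp add: case_prod_beta')
  finally have d: "pdy (Pent G n j) = gp I (\<lambda>i. u i * real (snd i)) p (\<lambda>i. snd i - 1)" .
  have P: "Pent G m c = gp J v p snd"
    unfolding Pent_tri tri_gp J_def v_def p_def by (simp add: case_prod_beta')
  have "ip W (pdy (Pent G n j)) (Pent G m c) = (\<Sum>i\<in>I. \<Sum>j\<in>J. (u i * real (snd i)) * v j * mom W (p i + p j) (snd i - 1 + snd j))"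
    unfolding d P by (rule ip_gp[OF fI])
  also have "\<dots> = (\<Sum>j\<in>J. v j * (4 * a04 * Psi I u p snd (p j) (snd j + 3) + 2 * a22 * Psi I u p snd (p j + 2) (snd j + 1)
        + 2 * a02 * Psi I u p snd (p j) (snd j + 1) - real (snd j) * Psi I u p snd (p j) (snd j - 1)))"
    by (rule ibp_sum_y[OF fI])
  also have "Psi I u p snd = Phi n j"
    using Psi_Phi[of n j] unfolding I_def u_def p_def by (simp add: case_prod_beta' fun_eq_iff)
  finally show ?thesis unfolding J_def v_def p_def .
qed

lemma Sigma_split_top:
  fixes m :: nat and g :: "nat \<Rightarrow> nat \<Rightarrow> real"
  assumes low: "\<And>k l. k < m \<Longrightarrow> l \<le> k \<Longrightarrow> g k l = 0"
  shows "(\<Sum>kl\<in>Sigma {..m} atMost. g (fst kl) (snd kl)) = (\<Sum>l\<le>m. g m l)"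
proof -
  have "(\<Sum>kl\<in>Sigma {..m} atMost. g (fst kl) (snd kl)) = (\<Sum>k\<le>m. \<Sum>l\<le>k. g k l)"
    by (subst sum.Sigma) (auto simp: case_prod_beta')
  also have "\<dots> = (\<Sum>k\<in>insert m {..<m}. \<Sum>l\<le>k. g k l)" by (simp add: lessThan_Suc_atMost[symmetric])
  also have "\<dots> = (\<Sum>l\<le>m. g m l)" by (simp add: low)
  finally show ?thesis .
qed

lemma C_formula_x:
  assumes n3: "3 \<le> n" and j: "j \<le> n" and c: "c \<le> n - 3"
    and sx: "\<And>x y. pdx (Pent G n j) x y = (\<Sum>c'<n. Bm c' * Pent G (n - 1) c' x y) + (\<Sum>c'<n - 2. Cm c' * Pent G (n - 3) c' x y)"
  shows "Cm c = (\<Sum>l\<le>n - 3. G (n - 3) (n - 3) $$ (c, l) * (4 * a40 * minv (G n n) $$ (l, j) + 2 * a22 * minv (G n n) $$ (l + 2, j)))"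
proof -
  have "Cm c = ip W (pdx (Pent G n j)) (Pent G (n - 3) c)"
    by (rule ip_struct[symmetric, OF n3 c]) (rule sx)
  also have "\<dots> = (\<Sum>l\<le>n - 3. G (n - 3) (n - 3) $$ (c, l) *
      (4 * a40 * Phi n j (n - 3 - l + 3) l + 2 * a22 * Phi n j (n - 3 - l + 1) (l + 2)
       + 2 * a20 * Phi n j (n - 3 - l + 1) l - real (n - 3 - l) * Phi n j (n - 3 - l - 1) l))"
    unfolding ip_dx_Pent
    by (rule Sigma_split_top[where g = "\<lambda>k l. G (n - 3) k $$ (c, l) *
      (4 * a40 * Phi n j (k - l + 3) l + 2 * a22 * Phi n j (k - l + 1) (l + 2)
       + 2 * a20 * Phi n j (k - l + 1) l - real (k - l) * Phi n j (k - l - 1) l)"])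
       (use n3 j in \<open>auto simp: Phi_zero\<close>)
  also have "\<dots> = (\<Sum>l\<le>n - 3. G (n - 3) (n - 3) $$ (c, l) * (4 * a40 * minv (G n n) $$ (l, j) + 2 * a22 * minv (G n n) $$ (l + 2, j)))"
    using n3 j by (intro sum.cong refl) (auto simp: Phi_zero Phi_top)
  finally show ?thesis .
qed

lemma C_formula_y:
  assumes n3: "3 \<le> n" and j: "j \<le> n" and c: "c \<le> n - 3"
    and sy: "\<And>x y. pdy (Pent G n j) x y = (\<Sum>c'<n. Bm c' * Pent G (n - 1) c' x y) + (\<Sum>c'<n - 2. Cm c' * Pent G (n - 3) c' x y)"
  shows "Cm c = (\<Sum>l\<le>n - 3. G (n - 3) (n - 3) $$ (c, l) * (4 * a04 * minv (G n n) $$ (l + 3, j) + 2 * a22 * minv (G n n) $$ (l + 1, j)))"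
proof -
  have "Cm c = ip W (pdy (Pent G n j)) (Pent G (n - 3) c)"
    by (rule ip_struct[symmetric, OF n3 c]) (rule sy)
  also have "\<dots> = (\<Sum>l\<le>n - 3. G (n - 3) (n - 3) $$ (c, l) *
      (4 * a04 * Phi n j (n - 3 - l) (l + 3) + 2 * a22 * Phi n j (n - 3 - l + 2) (l + 1)
       + 2 * a02 * Phi n j (n - 3 - l) (l + 1) - real l * Phi n j (n - 3 - l) (l - 1)))"
    unfolding ip_dy_Pent
    by (rule Sigma_split_top[where g = "\<lambda>k l. G (n - 3) k $$ (c, l) *
      (4 * a04 * Phi n j (k - l) (l + 3) + 2 * a22 * Phi n j (k - l + 2) (l + 1)
       + 2 * a02 * Phi n j (k - l) (l + 1) - real l * Phi n j (k - l) (l - 1))"])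
       (use n3 j in \<open>auto simp: Phi_zero\<close>)
  also have "\<dots> = (\<Sum>l\<le>n - 3. G (n - 3) (n - 3) $$ (c, l) * (4 * a04 * minv (G n n) $$ (l + 3, j) + 2 * a22 * minv (G n n) $$ (l + 1, j)))"
    using n3 j by (intro sum.cong refl) (auto simp: Phi_zero Phi_top)
  finally show ?thesis .
qed

end




definition gcf :: "(nat \<Rightarrow> nat \<Rightarrow> real mat) \<Rightarrow> nat \<Rightarrow> nat \<Rightarrow> nat \<Rightarrow> nat \<Rightarrow> real" where
  "gcf G n j k l = G n k $$ (j, l)"

lemma Pent_gcf: "Pent G n j = tri n (gcf G n j)"
  unfolding Pent_tri gcf_def by (simp add: fun_eq_iff)

lemma tri_diff: "tri N (\<lambda>k l. c k l - d k l) x y = tri N c x y - tri N d x y"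
  unfolding tri_def by (simp add: algebra_simps sum_subtractf)

lemma tri_eq_coeff:
  assumes "\<And>x y. tri N c x y = tri N d x y" "k \<le> N" "l \<le> k"
  shows "c k l = d k l"
  using tri_uniq[of N "\<lambda>k l. c k l - d k l" k l] assms by (simp add: tri_diff)

lemma Pz_n: "Pz G (int n) x y = vec (n + 1) (\<lambda>j. Pent G n j x y)"
  by (simp add: Pz_def)
lemma Pz_p1: "Pz G (int n + 1) x y = vec (n + 2) (\<lambda>j. Pent G (n + 1) j x y)"
  by (simp add: Pz_def nat_add_distrib)
lemma Pz_m1: "Pz G (int n - 1) x y = vec n (\<lambda>j. Pent G (n - 1) j x y)"
  by (cases "n = 0") (auto simp: Pz_def nat_diff_distrib intro!: eq_vecI)
lemma Pz_m3: "Pz G (int n - 3) x y = vec (n - 2) (\<lambda>j. Pent G (n - 3) j x y)"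
  by (cases "n < 3") (auto simp: Pz_def nat_diff_distrib intro!: eq_vecI)

lemma mvec: "M \<in> carrier_mat r d \<Longrightarrow> j < r \<Longrightarrow> (M *\<^sub>v vec d f) $ j = (\<Sum>c<d. M $$ (j, c) * f c)"
  by (simp add: scalar_prod_def atLeast0LessThan)

lemma tvec: "M \<in> carrier_mat d r \<Longrightarrow> j < r \<Longrightarrow> (transpose_mat M *\<^sub>v vec d f) $ j = (\<Sum>c<d. M $$ (c, j) * f c)"
  by (simp add: scalar_prod_def atLeast0LessThan)

lemma three_entry:
  assumes tt: "\<And>x y. z x y \<cdot>\<^sub>v Pz G (int n) x y = A1 *\<^sub>v Pz G (int n + 1) x y + transpose_mat Ap *\<^sub>v Pz G (int n - 1) x y"
    and A1: "A1 \<in> carrier_mat (n + 1) (n + 2)" and Ap: "Ap \<in> carrier_mat n (n + 1)" and j: "j \<le> n"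
  shows "z x y * Pent G n j x y = (\<Sum>c<n + 2. A1 $$ (j, c) * Pent G (n + 1) c x y) + (\<Sum>c<n. Ap $$ (c, j) * Pent G (n - 1) c x y)"
proof -
  have "(z x y \<cdot>\<^sub>v Pz G (int n) x y) $ j = (A1 *\<^sub>v Pz G (int n + 1) x y + transpose_mat Ap *\<^sub>v Pz G (int n - 1) x y) $ j"
    by (simp only: tt)
  moreover have "(z x y \<cdot>\<^sub>v Pz G (int n) x y) $ j = z x y * Pent G n j x y" unfolding Pz_n using j by simp
  moreover have "(A1 *\<^sub>v Pz G (int n + 1) x y + transpose_mat Ap *\<^sub>v Pz G (int n - 1) x y) $ j
     = (A1 *\<^sub>v Pz G (int n + 1) x y) $ j + (transpose_mat Ap *\<^sub>v Pz G (int n - 1) x y) $ j"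
    using j Ap by (intro index_add_vec(1)) simp
  moreover have "(A1 *\<^sub>v Pz G (int n + 1) x y) $ j = (\<Sum>c<n + 2. A1 $$ (j, c) * Pent G (n + 1) c x y)"
    unfolding Pz_p1 by (rule mvec[OF A1]) (use j in simp)
  moreover have "(transpose_mat Ap *\<^sub>v Pz G (int n - 1) x y) $ j = (\<Sum>c<n. Ap $$ (c, j) * Pent G (n - 1) c x y)"
    unfolding Pz_m1 by (rule tvec[OF Ap]) (use j in simp)
  ultimately show ?thesis by (simp only:)
qed

lemma struct_entry:
  assumes sx: "\<And>x y. vec (n + 1) (\<lambda>j. D j x y) = Bn *\<^sub>v Pz G (int n - 1) x y + Cn *\<^sub>v Pz G (int n - 3) x y"
    and Bn: "Bn \<in> carrier_mat (n + 1) n" and Cn: "Cn \<in> carrier_mat (n + 1) (n - 2)" and j: "j \<le> n"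
  shows "D j x y = (\<Sum>c<n. Bn $$ (j, c) * Pent G (n - 1) c x y) + (\<Sum>c<n - 2. Cn $$ (j, c) * Pent G (n - 3) c x y)"
proof -
  have "vec (n + 1) (\<lambda>j. D j x y) $ j = (Bn *\<^sub>v Pz G (int n - 1) x y + Cn *\<^sub>v Pz G (int n - 3) x y) $ j"
    by (simp only: sx)
  moreover have "vec (n + 1) (\<lambda>j. D j x y) $ j = D j x y" using j by simp
  moreover have "(Bn *\<^sub>v Pz G (int n - 1) x y + Cn *\<^sub>v Pz G (int n - 3) x y) $ j
     = (Bn *\<^sub>v Pz G (int n - 1) x y) $ j + (Cn *\<^sub>v Pz G (int n - 3) x y) $ j"
    using j Cn by (intro index_add_vec(1)) simp
  moreover have "(Bn *\<^sub>v Pz G (int n - 1) x y) $ j = (\<Sum>c<n. Bn $$ (j, c) * Pent G (n - 1) c x y)"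
    unfolding Pz_m1 by (rule mvec[OF Bn]) (use j in simp)
  moreover have "(Cn *\<^sub>v Pz G (int n - 3) x y) $ j = (\<Sum>c<n - 2. Cn $$ (j, c) * Pent G (n - 3) c x y)"
    unfolding Pz_m3 by (rule mvec[OF Cn]) (use j in simp)
  ultimately show ?thesis by (simp only:)
qed

lemma tri_sum_Pent:
  assumes "a \<le> N"
  shows "(\<Sum>c<d. w c * Pent G a c x y) = tri N (\<lambda>k l. \<Sum>c<d. w c * trunc a (gcf G a c) k l) x y"
  using assms by (simp add: tri_lin Pent_gcf tri_trunc)

lemma coef3x:
  assumes tt: "\<And>x y. x \<cdot>\<^sub>v Pz G (int n) x y = A1 *\<^sub>v Pz G (int n + 1) x y + transpose_mat Ap *\<^sub>v Pz G (int n - 1) x y"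
    and A1: "A1 \<in> carrier_mat (n + 1) (n + 2)" and Ap: "Ap \<in> carrier_mat n (n + 1)" and j: "j \<le> n"
    and m: "m \<le> n + 1" and l: "l \<le> m"
  shows "shx (gcf G n j) m l = (\<Sum>c<n + 2. A1 $$ (j, c) * trunc (n + 1) (gcf G (n + 1) c) m l) + (\<Sum>c<n. Ap $$ (c, j) * trunc (n - 1) (gcf G (n - 1) c) m l)"
proof -
  have "tri (Suc n) (shx (gcf G n j)) x y = tri (Suc n) (\<lambda>k l. (\<Sum>c<n + 2. A1 $$ (j, c) * trunc (n + 1) (gcf G (n + 1) c) k l) + (\<Sum>c<n. Ap $$ (c, j) * trunc (n - 1) (gcf G (n - 1) c) k l)) x y" for x y
  proof -
    have "tri (Suc n) (shx (gcf G n j)) x y = x * Pent G n j x y" by (simp add: tri_x Pent_gcf)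
    also have "\<dots> = (\<Sum>c<n + 2. A1 $$ (j, c) * Pent G (n + 1) c x y) + (\<Sum>c<n. Ap $$ (c, j) * Pent G (n - 1) c x y)"
      by (rule three_entry[where z = "\<lambda>x y. x", OF tt A1 Ap j])
    also have "\<dots> = tri (Suc n) (\<lambda>k l. (\<Sum>c<n + 2. A1 $$ (j, c) * trunc (n + 1) (gcf G (n + 1) c) k l) + (\<Sum>c<n. Ap $$ (c, j) * trunc (n - 1) (gcf G (n - 1) c) k l)) x y"
    proof -
      have s1: "(\<Sum>c<n + 2. A1 $$ (j, c) * Pent G (n + 1) c x y) = tri (Suc n) (\<lambda>k l. \<Sum>c<n + 2. A1 $$ (j, c) * trunc (n + 1) (gcf G (n + 1) c) k l) x y"
        by (rule tri_sum_Pent) simp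
      have s2: "(\<Sum>c<n. Ap $$ (c, j) * Pent G (n - 1) c x y) = tri (Suc n) (\<lambda>k l. \<Sum>c<n. Ap $$ (c, j) * trunc (n - 1) (gcf G (n - 1) c) k l) x y"
        by (rule tri_sum_Pent) simp
      show ?thesis by (simp only: s1 s2 tri_add)
    qed
    finally show ?thesis .
  qed
  then show ?thesis by (rule tri_eq_coeff) (use m l in auto)
qed

lemma coef3y:
  assumes tt: "\<And>x y. y \<cdot>\<^sub>v Pz G (int n) x y = A1 *\<^sub>v Pz G (int n + 1) x y + transpose_mat Ap *\<^sub>v Pz G (int n - 1) x y"
    and A1: "A1 \<in> carrier_mat (n + 1) (n + 2)" and Ap: "Ap \<in> carrier_mat n (n + 1)" and j: "j \<le> n"
    and m: "m \<le> n + 1" and l: "l \<le> m"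
  shows "shy (gcf G n j) m l = (\<Sum>c<n + 2. A1 $$ (j, c) * trunc (n + 1) (gcf G (n + 1) c) m l) + (\<Sum>c<n. Ap $$ (c, j) * trunc (n - 1) (gcf G (n - 1) c) m l)"
proof -
  have "tri (Suc n) (shy (gcf G n j)) x y = tri (Suc n) (\<lambda>k l. (\<Sum>c<n + 2. A1 $$ (j, c) * trunc (n + 1) (gcf G (n + 1) c) k l) + (\<Sum>c<n. Ap $$ (c, j) * trunc (n - 1) (gcf G (n - 1) c) k l)) x y" for x y
  proof -
    have "tri (Suc n) (shy (gcf G n j)) x y = y * Pent G n j x y" by (simp add: tri_y Pent_gcf)
    also have "\<dots> = (\<Sum>c<n + 2. A1 $$ (j, c) * Pent G (n + 1) c x y) + (\<Sum>c<n. Ap $$ (c, j) * Pent G (n - 1) c x y)"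
      by (rule three_entry[where z = "\<lambda>x y. y", OF tt A1 Ap j])
    also have "\<dots> = tri (Suc n) (\<lambda>k l. (\<Sum>c<n + 2. A1 $$ (j, c) * trunc (n + 1) (gcf G (n + 1) c) k l) + (\<Sum>c<n. Ap $$ (c, j) * trunc (n - 1) (gcf G (n - 1) c) k l)) x y"
    proof -
      have s1: "(\<Sum>c<n + 2. A1 $$ (j, c) * Pent G (n + 1) c x y) = tri (Suc n) (\<lambda>k l. \<Sum>c<n + 2. A1 $$ (j, c) * trunc (n + 1) (gcf G (n + 1) c) k l) x y"
        by (rule tri_sum_Pent) simp
      have s2: "(\<Sum>c<n. Ap $$ (c, j) * Pent G (n - 1) c x y) = tri (Suc n) (\<lambda>k l. \<Sum>c<n. Ap $$ (c, j) * trunc (n - 1) (gcf G (n - 1) c) k l) x y"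
        by (rule tri_sum_Pent) simp
      show ?thesis by (simp only: s1 s2 tri_add)
    qed
    finally show ?thesis .
  qed
  then show ?thesis by (rule tri_eq_coeff) (use m l in auto)
qed

lemma coefSx:
  assumes sx: "\<And>x y. vec (n + 1) (\<lambda>j. pdx (Pent G n j) x y) = Bn *\<^sub>v Pz G (int n - 1) x y + Cn *\<^sub>v Pz G (int n - 3) x y"
    and Bn: "Bn \<in> carrier_mat (n + 1) n" and Cn: "Cn \<in> carrier_mat (n + 1) (n - 2)" and j: "j \<le> n"
    and k: "k \<le> n" and l: "l \<le> k"
  shows "dxc (trunc n (gcf G n j)) k l = (\<Sum>c<n. Bn $$ (j, c) * trunc (n - 1) (gcf G (n - 1) c) k l) + (\<Sum>c<n - 2. Cn $$ (j, c) * trunc (n - 3) (gcf G (n - 3) c) k l)"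
proof -
  have "tri n (dxc (trunc n (gcf G n j))) x y = tri n (\<lambda>k l. (\<Sum>c<n. Bn $$ (j, c) * trunc (n - 1) (gcf G (n - 1) c) k l) + (\<Sum>c<n - 2. Cn $$ (j, c) * trunc (n - 3) (gcf G (n - 3) c) k l)) x y" for x y
  proof -
    have "tri n (dxc (trunc n (gcf G n j))) x y = pdx (Pent G n j) x y" by (simp add: Pent_gcf pdx_tri rawdx_tri)
    also have "\<dots> = (\<Sum>c<n. Bn $$ (j, c) * Pent G (n - 1) c x y) + (\<Sum>c<n - 2. Cn $$ (j, c) * Pent G (n - 3) c x y)"
      by (rule struct_entry[where D = "\<lambda>j. pdx (Pent G n j)", OF sx Bn Cn j])
    also have "\<dots> = tri n (\<lambda>k l. (\<Sum>c<n. Bn $$ (j, c) * trunc (n - 1) (gcf G (n - 1) c) k l) + (\<Sum>c<n - 2. Cn $$ (j, c) * trunc (n - 3) (gcf G (n - 3) c) k l)) x y"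
    proof -
      have s1: "(\<Sum>c<n. Bn $$ (j, c) * Pent G (n - 1) c x y) = tri (n) (\<lambda>k l. \<Sum>c<n. Bn $$ (j, c) * trunc (n - 1) (gcf G (n - 1) c) k l) x y"
        by (rule tri_sum_Pent) simp
      have s2: "(\<Sum>c<n - 2. Cn $$ (j, c) * Pent G (n - 3) c x y) = tri (n) (\<lambda>k l. \<Sum>c<n - 2. Cn $$ (j, c) * trunc (n - 3) (gcf G (n - 3) c) k l) x y"
        by (rule tri_sum_Pent) simp
      show ?thesis by (simp only: s1 s2 tri_add)
    qed
    finally show ?thesis .
  qed
  then show ?thesis by (rule tri_eq_coeff) (use k l in auto)
qed

lemma coefSy:
  assumes sy: "\<And>x y. vec (n + 1) (\<lambda>j. pdy (Pent G n j) x y) = Bn *\<^sub>v Pz G (int n - 1) x y + Cn *\<^sub>v Pz G (int n - 3) x y"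
    and Bn: "Bn \<in> carrier_mat (n + 1) n" and Cn: "Cn \<in> carrier_mat (n + 1) (n - 2)" and j: "j \<le> n"
    and k: "k \<le> n" and l: "l \<le> k"
  shows "dyc (trunc n (gcf G n j)) k l = (\<Sum>c<n. Bn $$ (j, c) * trunc (n - 1) (gcf G (n - 1) c) k l) + (\<Sum>c<n - 2. Cn $$ (j, c) * trunc (n - 3) (gcf G (n - 3) c) k l)"
proof -
  have "tri n (dyc (trunc n (gcf G n j))) x y = tri n (\<lambda>k l. (\<Sum>c<n. Bn $$ (j, c) * trunc (n - 1) (gcf G (n - 1) c) k l) + (\<Sum>c<n - 2. Cn $$ (j, c) * trunc (n - 3) (gcf G (n - 3) c) k l)) x y" for x y
  proof -
    have "tri n (dyc (trunc n (gcf G n j))) x y = pdy (Pent G n j) x y" by (simp add: Pent_gcf pdy_tri rawdy_tri)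
    also have "\<dots> = (\<Sum>c<n. Bn $$ (j, c) * Pent G (n - 1) c x y) + (\<Sum>c<n - 2. Cn $$ (j, c) * Pent G (n - 3) c x y)"
      by (rule struct_entry[where D = "\<lambda>j. pdy (Pent G n j)", OF sy Bn Cn j])
    also have "\<dots> = tri n (\<lambda>k l. (\<Sum>c<n. Bn $$ (j, c) * trunc (n - 1) (gcf G (n - 1) c) k l) + (\<Sum>c<n - 2. Cn $$ (j, c) * trunc (n - 3) (gcf G (n - 3) c) k l)) x y"
    proof -
      have s1: "(\<Sum>c<n. Bn $$ (j, c) * Pent G (n - 1) c x y) = tri (n) (\<lambda>k l. \<Sum>c<n. Bn $$ (j, c) * trunc (n - 1) (gcf G (n - 1) c) k l) x y"
        by (rule tri_sum_Pent) simp
      have s2: "(\<Sum>c<n - 2. Cn $$ (j, c) * Pent G (n - 3) c x y) = tri (n) (\<lambda>k l. \<Sum>c<n - 2. Cn $$ (j, c) * trunc (n - 3) (gcf G (n - 3) c) k l) x y"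
        by (rule tri_sum_Pent) simp
      show ?thesis by (simp only: s1 s2 tri_add)
    qed
    finally show ?thesis .
  qed
  then show ?thesis by (rule tri_eq_coeff) (use k l in auto)
qed




lemma Lm_carrier: "Lm i (int a) \<in> carrier_mat (a + 1) (a + 2)"
  by (simp add: Lm_def nat_add_distrib)

lemma Lm_index: "d < a + 1 \<Longrightarrow> l < a + 2 \<Longrightarrow> Lm i (int a) $$ (d, l) = (if (i = 1 \<and> l = d) \<or> (i = 2 \<and> l = d + 1) then 1 else 0)"
  by (simp add: Lm_def nat_add_distrib)

lemma Nm_carrier: "Nm i n \<in> carrier_mat n n"
  by (simp add: Nm_def)

lemma Nm_index: "r < n \<Longrightarrow> c < n \<Longrightarrow> Nm i n $$ (r, c) = (if r = c then (if i = 1 then real (n - r) else real (r + 1)) else 0)"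
  by (simp add: Nm_def)

lemma Km_carrier: "Km a40 a22 a04 i n \<in> carrier_mat (n + 1) (n + 1)"
  by (simp add: Km_def)

lemma Km_index: "r < n + 1 \<Longrightarrow> c < n + 1 \<Longrightarrow> Km a40 a22 a04 i n $$ (r, c) =
     (if i = 1 then (if c = r then 4 * a40 else if c = r + 2 then 2 * a22 else 0)
      else (if r = c then 4 * a04 else if r = c + 2 then 2 * a22 else 0))"
  by (simp add: Km_def)

lemma mult_Lm:
  fixes M :: "real mat"
  assumes M: "M \<in> carrier_mat r (a + 1)" and j: "j < r" and l: "l < a + 2" and i: "i \<in> {1, 2}"
  shows "(M * Lm i (int a)) $$ (j, l) = (if i = 1 then (if l \<le> a then M $$ (j, l) else 0) else (if 1 \<le> l then M $$ (j, l - 1) else 0))"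
proof -
  have "(M * Lm i (int a)) $$ (j, l) = (\<Sum>d<a + 1. M $$ (j, d) * Lm i (int a) $$ (d, l))"
    using M j l Lm_carrier[of i a] by (simp add: scalar_prod_def atLeast0LessThan)
  also have "\<dots> = (\<Sum>d<a + 1. if (i = 1 \<and> l = d) \<or> (i = 2 \<and> l = d + 1) then M $$ (j, d) else 0)"
    using l by (intro sum.cong refl) (simp add: Lm_index)
  also have "\<dots> = (if i = 1 then (if l \<le> a then M $$ (j, l) else 0) else (if 1 \<le> l then M $$ (j, l - 1) else 0))"
  proof (cases "i = 1")
    case True then show ?thesis by (simp add: sum.delta)
  next
    case False
    then have i2: "i = 2" using i by auto
    have "(\<Sum>d<a + 1. if (i = 1 \<and> l = d) \<or> (i = 2 \<and> l = d + 1) then M $$ (j, d) else 0)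
        = (\<Sum>d<a + 1. if d = l - 1 \<and> 1 \<le> l then M $$ (j, d) else 0)"
      using i2 by (intro sum.cong refl) auto
    also have "\<dots> = (if 1 \<le> l then M $$ (j, l - 1) else 0)"
      using l by (cases "1 \<le> l") (auto simp: sum.delta')
    finally show ?thesis using i2 by simp
  qed
  finally show ?thesis .
qed

lemma mult_LtN:
  fixes M :: "real mat"
  assumes M: "M \<in> carrier_mat r (a + 2)" and j: "j < r" and l: "l < a + 1" and i: "i \<in> {1, 2}"
  shows "(M * transpose_mat (Lm i (int a)) * Nm i (a + 1)) $$ (j, l) = (if i = 1 then real (a + 1 - l) * M $$ (j, l) else real (l + 1) * M $$ (j, l + 1))"
proof -
  have MLt: "M * transpose_mat (Lm i (int a)) \<in> carrier_mat r (a + 1)" using M Lm_carrier[of i a] by auto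
  have mle: "(M * transpose_mat (Lm i (int a))) $$ (j, d) = (if i = 1 then M $$ (j, d) else M $$ (j, d + 1))" if dlt: "d < a + 1" for d
  proof -
    have "(M * transpose_mat (Lm i (int a))) $$ (j, d) = (\<Sum>e<a + 2. M $$ (j, e) * Lm i (int a) $$ (d, e))"
      using M j dlt Lm_carrier[of i a] by (simp add: scalar_prod_def atLeast0LessThan)
    also have "\<dots> = (\<Sum>e<a + 2. if e = (if i = 1 then d else d + 1) then M $$ (j, e) else 0)"
      using dlt i by (intro sum.cong refl) (auto simp: Lm_index)
    also have "\<dots> = (if i = 1 then M $$ (j, d) else M $$ (j, d + 1))" using dlt by (simp add: sum.delta)
    finally show ?thesis .
  qed
  have "(M * transpose_mat (Lm i (int a)) * Nm i (a + 1)) $$ (j, l) = (\<Sum>d<a + 1. (M * transpose_mat (Lm i (int a))) $$ (j, d) * Nm i (a + 1) $$ (d, l))"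
    using M MLt j l Nm_carrier[of i "a + 1"] by (auto simp: scalar_prod_def atLeast0LessThan carrier_matD Lm_carrier simp del: sum.lessThan_Suc intro!: sum.cong)
  also have "\<dots> = (\<Sum>d<a + 1. if d = l then (M * transpose_mat (Lm i (int a))) $$ (j, d) * (if i = 1 then real (a + 1 - d) else real (d + 1)) else 0)"
    using l by (intro sum.cong refl) (auto simp: Nm_index)
  also have "\<dots> = (M * transpose_mat (Lm i (int a))) $$ (j, l) * (if i = 1 then real (a + 1 - l) else real (l + 1))"
    using l by (simp add: sum.delta)
  also have "\<dots> = (if i = 1 then real (a + 1 - l) * M $$ (j, l) else real (l + 1) * M $$ (j, l + 1))"
    using l by (simp add: mle)
  finally show ?thesis .
qed

lemma rowsel:
  fixes M :: "real mat"
  assumes M: "M \<in> carrier_mat (a + 2) q" and i: "i \<in> {1, 2}"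
  shows "Lm i (int a) * M = mat (a + 1) q (\<lambda>(b, e). M $$ (b + (if i = 1 then 0 else 1), e))"
proof (rule eq_matI)
  show "dim_row (Lm i (int a) * M) = dim_row (mat (a + 1) q (\<lambda>(b, e). M $$ (b + (if i = 1 then 0 else 1), e)))"
    using Lm_carrier[of i a] by simp
  show "dim_col (Lm i (int a) * M) = dim_col (mat (a + 1) q (\<lambda>(b, e). M $$ (b + (if i = 1 then 0 else 1), e)))"
    using M by simp
  fix b e assume b: "b < dim_row (mat (a + 1) q (\<lambda>(b, e). M $$ (b + (if i = 1 then 0 else 1), e)))"
    and e: "e < dim_col (mat (a + 1) q (\<lambda>(b, e). M $$ (b + (if i = 1 then 0 else 1), e)))"
  have "(Lm i (int a) * M) $$ (b, e) = (\<Sum>d<a + 2. Lm i (int a) $$ (b, d) * M $$ (d, e))"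
    using M b e Lm_carrier[of i a] by (simp add: scalar_prod_def atLeast0LessThan)
  also have "\<dots> = (\<Sum>d<a + 2. if d = b + (if i = 1 then 0 else 1) then M $$ (d, e) else 0)"
    using b i by (intro sum.cong refl) (auto simp: Lm_index)
  also have "\<dots> = M $$ (b + (if i = 1 then 0 else 1), e)" using b by (simp add: sum.delta)
  finally show "(Lm i (int a) * M) $$ (b, e) = mat (a + 1) q (\<lambda>(b, e). M $$ (b + (if i = 1 then 0 else 1), e)) $$ (b, e)"
    using b e by simp
qed

lemma two_delta:
  fixes g :: "nat \<Rightarrow> real"
  assumes "r < N" "s < N" "r \<noteq> s"
  shows "(\<Sum>e<N. (if e = r then \<alpha> else if e = s then \<beta> else 0) * g e) = \<alpha> * g r + \<beta> * g s"
proof -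
  have "(\<Sum>e<N. (if e = r then \<alpha> else if e = s then \<beta> else 0) * g e) = (\<Sum>e<N. (if e = r then \<alpha> * g e else 0) + (if e = s then \<beta> * g e else 0))"
    using assms(3) by (intro sum.cong refl) auto
  also have "\<dots> = \<alpha> * g r + \<beta> * g s" using assms by (simp add: sum.distrib sum.delta)
  finally show ?thesis .
qed




lemma mm: "X \<in> carrier_mat r q \<Longrightarrow> Y \<in> carrier_mat q s \<Longrightarrow> j < r \<Longrightarrow> l < s \<Longrightarrow>
   (X * Y) $$ (j, l) = (\<Sum>c<q. X $$ (j, c) * Y $$ (c, l))"
  by (simp add: scalar_prod_def atLeast0LessThan)

lemma Gz_carrier:
  assumes G_dim: "\<And>n k. k \<le> n \<Longrightarrow> G n k \<in> carrier_mat (n + 1) (k + 1)"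
  shows "Gz G a b \<in> carrier_mat (nat (a + 1)) (nat (b + 1))"
  using G_dim[of "nat b" "nat a"] by (auto simp: Gz_def nat_add_distrib)

lemma Gz_in: "0 \<le> b \<Longrightarrow> b \<le> a \<Longrightarrow> Gz G a b = G (nat a) (nat b)"
  by (simp add: Gz_def)

lemma Gz_out: "\<not> (0 \<le> b \<and> b \<le> a) \<Longrightarrow> Gz G a b = 0\<^sub>m (nat (a + 1)) (nat (b + 1))"
  unfolding Gz_def by auto

lemma Az_carrier:
  assumes A_dim: "\<And>i n. i \<in> {1, 2} \<Longrightarrow> A i n \<in> carrier_mat (n + 1) (n + 2)" and i: "i \<in> {1, 2}"
  shows "Az A i (int n - 1) \<in> carrier_mat n (n + 1)"
proof (cases "n = 0")
  case True then show ?thesis by (simp add: Az_def)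
next
  case False then show ?thesis using A_dim[OF i, of "n - 1"] by (simp add: Az_def nat_diff_distrib)
qed

lemma P4_gen:
  fixes G A :: "nat \<Rightarrow> nat \<Rightarrow> real mat"
  assumes G_dim: "\<And>n k. k \<le> n \<Longrightarrow> G n k \<in> carrier_mat (n + 1) (k + 1)"
    and A_dim: "\<And>i n. i \<in> {1, 2} \<Longrightarrow> A i n \<in> carrier_mat (n + 1) (n + 2)"
    and ttx: "\<And>x y. x \<cdot>\<^sub>v Pz G (int n) x y = A 1 n *\<^sub>v Pz G (int n + 1) x y + transpose_mat (Az A 1 (int n - 1)) *\<^sub>v Pz G (int n - 1) x y"
    and tty: "\<And>x y. y \<cdot>\<^sub>v Pz G (int n) x y = A 2 n *\<^sub>v Pz G (int n + 1) x y + transpose_mat (Az A 2 (int n - 1)) *\<^sub>v Pz G (int n - 1) x y"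
    and i: "i \<in> {1, 2}" and m1: "1 \<le> m" and m2: "m \<le> n + 1"
  shows "A i n * Gz G (int n + 1) (int m) + transpose_mat (Az A i (int n - 1)) * Gz G (int n - 1) (int m)
       = Gz G (int n) (int m - 1) * Lm i (int m - 1)"
proof -
  define Ap where "Ap = Az A i (int n - 1)"
  have Ap: "Ap \<in> carrier_mat n (n + 1)" unfolding Ap_def by (rule Az_carrier[OF A_dim i])
  have Ai: "A i n \<in> carrier_mat (n + 1) (n + 2)" using A_dim[OF i] .
  have g1: "Gz G (int n + 1) (int m) = G (n + 1) m" using m2 by (simp add: Gz_in nat_add_distrib)
  have g2: "Gz G (int n) (int m - 1) = G n (m - 1)" using m1 m2 by (simp add: Gz_in nat_diff_distrib)
  have l2: "Lm i (int m - 1) = Lm i (int (m - 1))" using m1 by simp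
  define Gm where "Gm = Gz G (int n - 1) (int m)"
  have Gm: "Gm \<in> carrier_mat n (m + 1)" unfolding Gm_def using Gz_carrier[OF G_dim, of "int n - 1" "int m"]
    by (cases "n = 0") (auto simp: nat_diff_distrib nat_add_distrib)
  have Gm_ent: "Gm $$ (c, l) = trunc (n - 1) (gcf G (n - 1) c) m l" if "c < n" "l < m + 1" for c l
  proof (cases "m + 1 \<le> n")
    case True then show ?thesis unfolding Gm_def by (simp add: Gz_in nat_diff_distrib trunc_def gcf_def)
  next
    case False then show ?thesis unfolding Gm_def using that by (simp add: Gz_out trunc_def)
  qed
  have G1: "G (n + 1) m \<in> carrier_mat (n + 2) (m + 1)" using G_dim[of m "n + 1"] m2 by simp
  have G2: "G n (m - 1) \<in> carrier_mat (n + 1) (m - 1 + 1)" using G_dim[of "m - 1" n] m2 by simp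
  show ?thesis unfolding g1 g2 l2 Ap_def[symmetric] Gm_def[symmetric]
  proof (rule eq_matI)
    show "dim_row (A i n * G (n + 1) m + transpose_mat Ap * Gm) = dim_row (G n (m - 1) * Lm i (int (m - 1)))"
      using Ai Ap Gm G2 by simp
    show "dim_col (A i n * G (n + 1) m + transpose_mat Ap * Gm) = dim_col (G n (m - 1) * Lm i (int (m - 1)))"
      using Gm Lm_carrier[of i "m - 1"] m1 by simp
    fix j l assume j: "j < dim_row (G n (m - 1) * Lm i (int (m - 1)))" and l: "l < dim_col (G n (m - 1) * Lm i (int (m - 1)))"
    have j': "j \<le> n" using j G2 by simp
    have l': "l \<le> m" using l Lm_carrier[of i "m - 1"] m1 by simp
    have lhs: "(A i n * G (n + 1) m + transpose_mat Ap * Gm) $$ (j, l)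
        = (\<Sum>c<n + 2. A i n $$ (j, c) * trunc (n + 1) (gcf G (n + 1) c) m l) + (\<Sum>c<n. Ap $$ (c, j) * trunc (n - 1) (gcf G (n - 1) c) m l)"
    proof -
      have "(A i n * G (n + 1) m + transpose_mat Ap * Gm) $$ (j, l) = (A i n * G (n + 1) m) $$ (j, l) + (transpose_mat Ap * Gm) $$ (j, l)"
        using Ai Ap Gm G1 j' l' by (intro index_add_mat(1)) auto
      also have "(A i n * G (n + 1) m) $$ (j, l) = (\<Sum>c<n + 2. A i n $$ (j, c) * G (n + 1) m $$ (c, l))"
        using j' l' by (intro mm[OF Ai G1]) auto
      also have "\<dots> = (\<Sum>c<n + 2. A i n $$ (j, c) * trunc (n + 1) (gcf G (n + 1) c) m l)"
        using m2 by (intro sum.cong refl) (simp add: trunc_def gcf_def)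
      also have "(transpose_mat Ap * Gm) $$ (j, l) = (\<Sum>c<n. transpose_mat Ap $$ (j, c) * Gm $$ (c, l))"
        using j' l' Ap by (intro mm[OF _ Gm]) auto
      also have "\<dots> = (\<Sum>c<n. Ap $$ (c, j) * trunc (n - 1) (gcf G (n - 1) c) m l)"
        using j' l' Ap by (intro sum.cong refl) (auto simp: Gm_ent)
      finally show ?thesis .
    qed
    have rhs: "(G n (m - 1) * Lm i (int (m - 1))) $$ (j, l) = (if i = 1 then shx (gcf G n j) m l else shy (gcf G n j) m l)"
    proof -
      have "(G n (m - 1) * Lm i (int (m - 1))) $$ (j, l) = (if i = 1 then (if l \<le> m - 1 then G n (m - 1) $$ (j, l) else 0) else (if 1 \<le> l then G n (m - 1) $$ (j, l - 1) else 0))"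
        by (rule mult_Lm[OF G2 _ _ i]) (use j' l' m1 in auto)
      then show ?thesis using l' m1 by (auto simp: shx_def shy_def gcf_def)
    qed
    have key: "(if i = 1 then shx (gcf G n j) m l else shy (gcf G n j) m l)
        = (\<Sum>c<n + 2. A i n $$ (j, c) * trunc (n + 1) (gcf G (n + 1) c) m l) + (\<Sum>c<n. Ap $$ (c, j) * trunc (n - 1) (gcf G (n - 1) c) m l)"
    proof (cases "i = 1")
      case True
      have Ap1: "Az A 1 (int n - 1) \<in> carrier_mat n (n + 1)" by (rule Az_carrier[OF A_dim]) auto
      have A1: "A 1 n \<in> carrier_mat (n + 1) (n + 2)" by (rule A_dim) auto
      show ?thesis using coef3x[OF ttx A1 Ap1 j' m2 l'] True unfolding Ap_def by simp
    next
      case False then have "i = 2" using i by auto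
      have Ap1: "Az A 2 (int n - 1) \<in> carrier_mat n (n + 1)" by (rule Az_carrier[OF A_dim]) auto
      have A1: "A 2 n \<in> carrier_mat (n + 1) (n + 2)" by (rule A_dim) simp
      show ?thesis using coef3y[OF tty A1 Ap1 j' m2 l'] \<open>i = 2\<close> unfolding Ap_def by simp
    qed
    show "(A i n * G (n + 1) m + transpose_mat Ap * Gm) $$ (j, l) = (G n (m - 1) * Lm i (int (m - 1))) $$ (j, l)"
      unfolding lhs rhs key ..
  qed
qed

lemma V_core:
  fixes G B C :: "nat \<Rightarrow> nat \<Rightarrow> real mat"
  assumes G_dim: "\<And>n k. k \<le> n \<Longrightarrow> G n k \<in> carrier_mat (n + 1) (k + 1)"
    and B_dim: "\<And>i. i \<in> {1, 2} \<Longrightarrow> B i n \<in> carrier_mat (n + 1) n"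
    and C_dim: "\<And>i. i \<in> {1, 2} \<Longrightarrow> C i n \<in> carrier_mat (n + 1) (n - 2)"
    and sx: "\<And>x y. vec (n + 1) (\<lambda>j. pdx (Pent G n j) x y) = B 1 n *\<^sub>v Pz G (int n - 1) x y + C 1 n *\<^sub>v Pz G (int n - 3) x y"
    and sy: "\<And>x y. vec (n + 1) (\<lambda>j. pdy (Pent G n j) x y) = B 2 n *\<^sub>v Pz G (int n - 1) x y + C 2 n *\<^sub>v Pz G (int n - 3) x y"
    and i: "i \<in> {1, 2}" and m: "m + 1 \<le> n"
  shows "B i n * G (n - 1) m + C i n * Gz G (int n - 3) (int m) = G n (m + 1) * transpose_mat (Lm i (int m)) * Nm i (m + 1)"
proof -
  have Bi: "B i n \<in> carrier_mat (n + 1) n" using B_dim[OF i] .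
  have Ci: "C i n \<in> carrier_mat (n + 1) (n - 2)" using C_dim[OF i] .
  define G3 where "G3 = Gz G (int n - 3) (int m)"
  have G3: "G3 \<in> carrier_mat (n - 2) (m + 1)" unfolding G3_def using Gz_carrier[OF G_dim, of "int n - 3" "int m"]
    by (cases "n < 2") (auto simp: nat_diff_distrib nat_add_distrib)
  have G3_ent: "G3 $$ (c, l) = trunc (n - 3) (gcf G (n - 3) c) m l" if "c < n - 2" "l < m + 1" for c l
  proof (cases "m + 3 \<le> n")
    case True then show ?thesis unfolding G3_def by (simp add: Gz_in nat_diff_distrib trunc_def gcf_def)
  next
    case False then show ?thesis unfolding G3_def using that by (simp add: Gz_out trunc_def)
  qed
  have G1: "G (n - 1) m \<in> carrier_mat n (m + 1)" using G_dim[of m "n - 1"] m by simp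
  have G2: "G n (m + 1) \<in> carrier_mat (n + 1) (m + 2)" using G_dim[of "m + 1" n] m by simp
  show ?thesis unfolding G3_def[symmetric]
  proof (rule eq_matI)
    show "dim_row (B i n * G (n - 1) m + C i n * G3) = dim_row (G n (m + 1) * transpose_mat (Lm i (int m)) * Nm i (m + 1))"
      using G3 Ci G2 by simp
    show "dim_col (B i n * G (n - 1) m + C i n * G3) = dim_col (G n (m + 1) * transpose_mat (Lm i (int m)) * Nm i (m + 1))"
      using G3 Nm_carrier[of i "m + 1"] by simp
    fix j l assume j: "j < dim_row (G n (m + 1) * transpose_mat (Lm i (int m)) * Nm i (m + 1))"
      and l: "l < dim_col (G n (m + 1) * transpose_mat (Lm i (int m)) * Nm i (m + 1))"
    have j': "j \<le> n" using j G2 by simp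
    have l': "l \<le> m" using l Nm_carrier[of i "m + 1"] by simp
    have lhs: "(B i n * G (n - 1) m + C i n * G3) $$ (j, l)
        = (\<Sum>c<n. B i n $$ (j, c) * trunc (n - 1) (gcf G (n - 1) c) m l) + (\<Sum>c<n - 2. C i n $$ (j, c) * trunc (n - 3) (gcf G (n - 3) c) m l)"
    proof -
      have "(B i n * G (n - 1) m + C i n * G3) $$ (j, l) = (B i n * G (n - 1) m) $$ (j, l) + (C i n * G3) $$ (j, l)"
        using Bi Ci G1 G3 j' l' by (intro index_add_mat(1)) auto
      also have "(B i n * G (n - 1) m) $$ (j, l) = (\<Sum>c<n. B i n $$ (j, c) * G (n - 1) m $$ (c, l))"
        using j' l' by (intro mm[OF Bi G1]) auto
      also have "\<dots> = (\<Sum>c<n. B i n $$ (j, c) * trunc (n - 1) (gcf G (n - 1) c) m l)"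
        using m by (intro sum.cong refl) (simp add: trunc_def gcf_def)
      also have "(C i n * G3) $$ (j, l) = (\<Sum>c<n - 2. C i n $$ (j, c) * G3 $$ (c, l))"
        using j' l' by (intro mm[OF Ci G3]) auto
      also have "\<dots> = (\<Sum>c<n - 2. C i n $$ (j, c) * trunc (n - 3) (gcf G (n - 3) c) m l)"
        using l' by (intro sum.cong refl) (auto simp: G3_ent)
      finally show ?thesis .
    qed
    have rhs: "(G n (m + 1) * transpose_mat (Lm i (int m)) * Nm i (m + 1)) $$ (j, l)
       = (if i = 1 then dxc (trunc n (gcf G n j)) m l else dyc (trunc n (gcf G n j)) m l)"
    proof -
      have "(G n (m + 1) * transpose_mat (Lm i (int m)) * Nm i (m + 1)) $$ (j, l) = (if i = 1 then real (m + 1 - l) * G n (m + 1) $$ (j, l) else real (l + 1) * G n (m + 1) $$ (j, l + 1))"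
        by (rule mult_LtN[OF G2 _ _ i]) (use j' l' in auto)
      then show ?thesis using m by (auto simp: dxc_def dyc_def trunc_def gcf_def)
    qed
    have key: "(if i = 1 then dxc (trunc n (gcf G n j)) m l else dyc (trunc n (gcf G n j)) m l)
        = (\<Sum>c<n. B i n $$ (j, c) * trunc (n - 1) (gcf G (n - 1) c) m l) + (\<Sum>c<n - 2. C i n $$ (j, c) * trunc (n - 3) (gcf G (n - 3) c) m l)"
    proof (cases "i = 1")
      case True
      have B1: "B 1 n \<in> carrier_mat (n + 1) n" by (rule B_dim) auto
      have C1: "C 1 n \<in> carrier_mat (n + 1) (n - 2)" by (rule C_dim) auto
      show ?thesis using coefSx[OF sx B1 C1 j', of m l] True m l' by simp
    next
      case False then have i2: "i = 2" using i by auto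
      have B1: "B 2 n \<in> carrier_mat (n + 1) n" by (rule B_dim) auto
      have C1: "C 2 n \<in> carrier_mat (n + 1) (n - 2)" by (rule C_dim) auto
      show ?thesis using coefSy[OF sy B1 C1 j', of m l] i2 m l' by simp
    qed
    show "(B i n * G (n - 1) m + C i n * G3) $$ (j, l) = (G n (m + 1) * transpose_mat (Lm i (int m)) * Nm i (m + 1)) $$ (j, l)"
      unfolding lhs rhs key ..
  qed
qed




lemma cancel_right:
  fixes X Y Z :: "real mat"
  assumes inv: "invertible_mat Z" and Z: "Z \<in> carrier_mat k k" and X: "X \<in> carrier_mat r k" and Y: "Y \<in> carrier_mat r k"
    and eq: "X * Z = Y * Z"
  shows "X = Y"
proof -
  note mp = minv_props[OF inv Z]
  have "X = X * (Z * minv Z)" using X mp by simp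
  also have "\<dots> = (X * Z) * minv Z" using X Z mp by (simp add: assoc_mult_mat[symmetric])
  also have "\<dots> = (Y * Z) * minv Z" unfolding eq ..
  also have "\<dots> = Y * (Z * minv Z)" using Y Z mp by (simp add: assoc_mult_mat)
  also have "\<dots> = Y" using Y mp by simp
  finally show ?thesis .
qed

lemma add_to_minus:
  fixes X Y Z :: "real mat"
  assumes X: "X \<in> carrier_mat r k" and Y: "Y \<in> carrier_mat r k" and eq: "X + Y = Z"
  shows "Y = Z - X"
proof (rule eq_matI)
  have Z: "Z \<in> carrier_mat r k" using X Y eq by auto
  show "dim_row Y = dim_row (Z - X)" "dim_col Y = dim_col (Z - X)" using X Y Z by auto
  fix a b assume "a < dim_row (Z - X)" "b < dim_col (Z - X)"
  then have ab: "a < r" "b < k" using X by auto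
  have "Z $$ (a, b) = X $$ (a, b) + Y $$ (a, b)" unfolding eq[symmetric] using ab Y by simp
  then show "Y $$ (a, b) = (Z - X) $$ (a, b)" using ab X by simp
qed

theorem proposition4p3:
  fixes a40 a22 a04 a20 a02 :: real
    and G :: "nat \<Rightarrow> nat \<Rightarrow> real mat"
    and A B C :: "nat \<Rightarrow> nat \<Rightarrow> real mat"
  assumes a40: "a40 \<ge> 0" and a22: "a22 \<ge> 0" and a04: "a04 \<ge> 0"
    and pos1: "a40 + a22 > 0" and pos2: "a22 + a04 > 0"
    and integrable: "\<And>p r. integrable (lborel :: (real \<times> real) measure)
         (\<lambda>(x, y). x ^ p * y ^ r * freud_W a40 a22 a04 a20 a02 x y)"
    and G_dim: "\<And>n k. k \<le> n \<Longrightarrow> G n k \<in> carrier_mat (n + 1) (k + 1)"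
    and G_inv: "\<And>n. invertible_mat (G n n)"
    and orthonormal: "\<And>n m j l. j \<le> n \<Longrightarrow> l \<le> m \<Longrightarrow>
         ip (freud_W a40 a22 a04 a20 a02) (Pent G n j) (Pent G m l)
           = (if n = m \<and> j = l then 1 else 0)"
    and A_dim: "\<And>i n. i \<in> {1, 2} \<Longrightarrow> A i n \<in> carrier_mat (n + 1) (n + 2)"
    and three_term_x: "\<And>n x y. x \<cdot>\<^sub>v Pz G (int n) x y
         = A 1 n *\<^sub>v Pz G (int n + 1) x y + transpose_mat (Az A 1 (int n - 1)) *\<^sub>v Pz G (int n - 1) x y"
    and three_term_y: "\<And>n x y. y \<cdot>\<^sub>v Pz G (int n) x y
         = A 2 n *\<^sub>v Pz G (int n + 1) x y + transpose_mat (Az A 2 (int n - 1)) *\<^sub>v Pz G (int n - 1) x y"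
    and B_dim: "\<And>i n. i \<in> {1, 2} \<Longrightarrow> n \<ge> 1 \<Longrightarrow> B i n \<in> carrier_mat (n + 1) n"
    and C_dim: "\<And>i n. i \<in> {1, 2} \<Longrightarrow> n \<ge> 1 \<Longrightarrow> C i n \<in> carrier_mat (n + 1) (n - 2)"
    and struct_x: "\<And>n x y. n \<ge> 1 \<Longrightarrow> vec (n + 1) (\<lambda>j. pdx (Pent G n j) x y)
         = B 1 n *\<^sub>v Pz G (int n - 1) x y + C 1 n *\<^sub>v Pz G (int n - 3) x y"
    and struct_y: "\<And>n x y. n \<ge> 1 \<Longrightarrow> vec (n + 1) (\<lambda>j. pdy (Pent G n j) x y)
         = B 2 n *\<^sub>v Pz G (int n - 1) x y + C 2 n *\<^sub>v Pz G (int n - 3) x y"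
    and i: "i \<in> {1, 2 :: nat}"
  shows "(\<forall>n\<ge>1. B i n = Ainv G i (n - 1) * G (n - 1) (n - 1) * Nm i n * minv (G (n - 1) (n - 1)))
    \<and> (\<forall>n\<ge>3. transpose_mat (C i n)
          = A i (n - 3) * A i (n - 2) * A i (n - 1) * G n n * Km a40 a22 a04 i n * minv (G n n))
    \<and> (\<forall>n\<ge>3. C i n = G n (n - 2) * minv (G (n - 2) (n - 2)) * B i (n - 2)
                      - B i n * G (n - 1) (n - 3) * minv (G (n - 3) (n - 3)))
    \<and> (\<forall>n k. k \<le> n div 2 \<longrightarrow>
          A i n * Gz G (int n + 1) (int n - 2 * int k + 1)
          + transpose_mat (Az A i (int n - 1)) * Gz G (int n - 1) (int n - 2 * int k + 1)
          = Gz G (int n) (int n - 2 * int k) * Lm i (int n - 2 * int k))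
    \<and> (\<forall>n k. n \<ge> 1 \<longrightarrow> k \<le> n div 2 \<longrightarrow>
          B i n * Gz G (int n - 1) (int n - 2 * int k - 1)
          + C i n * Gz G (int n - 3) (int n - 2 * int k - 1)
          = Gz G (int n) (int n - 2 * int k) * transpose_mat (Lm i (int n - 2 * int k - 1))
            * Nm i (n - 2 * k))"
proof -
  interpret O: ops2 "freud_W a40 a22 a04 a20 a02" G a40 a22 a04 a20 a02
  proof (unfold_locales)
    show "\<And>p r. integrable lborel (\<lambda>(x, y). x ^ p * y ^ r * freud_W a40 a22 a04 a20 a02 x y)" by (rule integrable)
    show "\<And>n k. k \<le> n \<Longrightarrow> G n k \<in> carrier_mat (n + 1) (k + 1)" by (rule G_dim)
    show "\<And>n. invertible_mat (G n n)" by (rule G_inv)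
    show "\<And>n m j l. j \<le> n \<Longrightarrow> l \<le> m \<Longrightarrow> ip (freud_W a40 a22 a04 a20 a02) (Pent G n j) (Pent G m l) = (if n = m \<and> j = l then 1 else 0)"
      by (rule orthonormal)
    show "\<And>a b. real a * mom (freud_W a40 a22 a04 a20 a02) (a - 1) b = 4 * a40 * mom (freud_W a40 a22 a04 a20 a02) (a + 3) b + 2 * a22 * mom (freud_W a40 a22 a04 a20 a02) (a + 1) (b + 2) + 2 * a20 * mom (freud_W a40 a22 a04 a20 a02) (a + 1) b"
      by (rule mom_ibp_x[OF integrable])
    show "\<And>a b. real b * mom (freud_W a40 a22 a04 a20 a02) a (b - 1) = 4 * a04 * mom (freud_W a40 a22 a04 a20 a02) a (b + 3) + 2 * a22 * mom (freud_W a40 a22 a04 a20 a02) (a + 2) (b + 1) + 2 * a02 * mom (freud_W a40 a22 a04 a20 a02) a (b + 1)"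
      by (rule mom_ibp_y[OF integrable])
  qed
  have P4: "A i n * Gz G (int n + 1) (int m) + transpose_mat (Az A i (int n - 1)) * Gz G (int n - 1) (int m)
       = Gz G (int n) (int m - 1) * Lm i (int m - 1)" if "1 \<le> m" "m \<le> n + 1" for n m
    by (rule P4_gen[OF G_dim A_dim three_term_x three_term_y i that])
  have V: "B i n * G (n - 1) m + C i n * Gz G (int n - 3) (int m) = G n (m + 1) * transpose_mat (Lm i (int m)) * Nm i (m + 1)"
    if n1: "1 \<le> n" and m: "m + 1 \<le> n" for n m
  proof (rule V_core[where B=B and C=C, OF G_dim _ _ struct_x[OF n1] struct_y[OF n1] i m])
    show "\<And>i. i \<in> {1, 2} \<Longrightarrow> B i n \<in> carrier_mat (n + 1) n" using B_dim n1 by auto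
    show "\<And>i. i \<in> {1, 2} \<Longrightarrow> C i n \<in> carrier_mat (n + 1) (n - 2)" using C_dim n1 by auto
  qed (use n1 in auto)
  have part4: "\<forall>n k. k \<le> n div 2 \<longrightarrow>
          A i n * Gz G (int n + 1) (int n - 2 * int k + 1)
          + transpose_mat (Az A i (int n - 1)) * Gz G (int n - 1) (int n - 2 * int k + 1)
          = Gz G (int n) (int n - 2 * int k) * Lm i (int n - 2 * int k)"
  proof (intro allI impI)
    fix n k :: nat assume k: "k \<le> n div 2"
    define m where "m = n - 2 * k + 1"
    have e2: "int m - 1 = int n - 2 * int k" using k by (auto simp: m_def)
    have e1: "int m = int n - 2 * int k + 1" using k by (auto simp: m_def)
    have h: "A i n * Gz G (int n + 1) (int m) + transpose_mat (Az A i (int n - 1)) * Gz G (int n - 1) (int m)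
       = Gz G (int n) (int m - 1) * Lm i (int m - 1)" by (rule P4) (use k in \<open>auto simp: m_def\<close>)
    show "A i n * Gz G (int n + 1) (int n - 2 * int k + 1)
          + transpose_mat (Az A i (int n - 1)) * Gz G (int n - 1) (int n - 2 * int k + 1)
          = Gz G (int n) (int n - 2 * int k) * Lm i (int n - 2 * int k)"
      using h[unfolded e1] by simp
  qed
  have part5: "\<forall>n k. n \<ge> 1 \<longrightarrow> k \<le> n div 2 \<longrightarrow>
          B i n * Gz G (int n - 1) (int n - 2 * int k - 1)
          + C i n * Gz G (int n - 3) (int n - 2 * int k - 1)
          = Gz G (int n) (int n - 2 * int k) * transpose_mat (Lm i (int n - 2 * int k - 1))
            * Nm i (n - 2 * k)"
  proof (intro allI impI)
    fix n k :: nat assume n1: "n \<ge> 1" and k: "k \<le> n div 2"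
    have Bi: "B i n \<in> carrier_mat (n + 1) n" using B_dim i n1 by auto
    have Ci: "C i n \<in> carrier_mat (n + 1) (n - 2)" using C_dim i n1 by auto
    show "B i n * Gz G (int n - 1) (int n - 2 * int k - 1)
          + C i n * Gz G (int n - 3) (int n - 2 * int k - 1)
          = Gz G (int n) (int n - 2 * int k) * transpose_mat (Lm i (int n - 2 * int k - 1))
            * Nm i (n - 2 * k)"
    proof (cases "2 * k < n")
      case True
      define m where "m = n - 2 * k - 1"
      have m1: "m + 1 \<le> n" using True by (simp add: m_def)
      have e1: "int n - 2 * int k - 1 = int m" using True by (simp add: m_def)
      have e2: "int n - 2 * int k = int (m + 1)" using True by (simp add: m_def)
      have e3: "n - 2 * k = m + 1" using True by (simp add: m_def)
      have g1: "Gz G (int n - 1) (int m) = G (n - 1) m" using m1 by (simp add: Gz_in nat_diff_distrib)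
      have g2: "Gz G (int n) (int (m + 1)) = G n (m + 1)" using m1 by (simp add: Gz_in nat_add_distrib)
      show ?thesis unfolding e1 unfolding e2 e3 g1 g2 by (rule V[OF n1 m1])
    next
      case False
      then have n2: "n = 2 * k" using k by auto
      have e1: "int n - 2 * int k - 1 = - 1" and e2: "int n - 2 * int k = 0" and e3: "n - 2 * k = 0" using n2 by auto
      have c1: "Gz G (int n - 1) (- 1) \<in> carrier_mat n 0" using Gz_carrier[OF G_dim, of "int n - 1" "- 1"] n1 by (simp add: nat_diff_distrib)
      have c2: "Gz G (int n - 3) (- 1) \<in> carrier_mat (n - 2) 0" using Gz_carrier[OF G_dim, of "int n - 3" "- 1"] by (cases "n < 2") (auto simp: nat_diff_distrib)
      have c3: "Gz G (int n) 0 \<in> carrier_mat (n + 1) 1" using Gz_carrier[OF G_dim, of "int n" 0] by (simp add: nat_add_distrib)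
      have c4: "Lm i (- 1) \<in> carrier_mat 0 1" by (simp add: Lm_def)
      show ?thesis unfolding e1 unfolding e2 e3
        by (rule eq_matI) (use Bi Ci c1 c2 c3 c4 Nm_carrier[of i 0] in auto)
    qed
  qed
  have BG: "B i n * G (n - 1) (n - 1) = G n n * transpose_mat (Lm i (int (n - 1))) * Nm i n" if n1: "1 \<le> n" for n
  proof -
    have h: "B i n * G (n - 1) (n - 1) + C i n * Gz G (int n - 3) (int (n - 1)) = G n (n - 1 + 1) * transpose_mat (Lm i (int (n - 1))) * Nm i (n - 1 + 1)"
      by (rule V[OF n1]) (use n1 in auto)
    have nn: "nat (int n - 2) = n - 2" by (cases "n \<ge> 2") auto
    have z: "Gz G (int n - 3) (int (n - 1)) = 0\<^sub>m (n - 2) n" using n1 by (simp add: Gz_out nat_diff_distrib nn)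
    have Ci: "C i n \<in> carrier_mat (n + 1) (n - 2)" using C_dim i n1 by auto
    have Bi: "B i n \<in> carrier_mat (n + 1) n" using B_dim i n1 by auto
    have "B i n * G (n - 1) (n - 1) \<in> carrier_mat (n + 1) n" using Bi G_dim[of "n - 1" "n - 1"] n1 by auto
    then show ?thesis using h Ci n1 unfolding z by simp
  qed
  have part1: "\<forall>n\<ge>1. B i n = Ainv G i (n - 1) * G (n - 1) (n - 1) * Nm i n * minv (G (n - 1) (n - 1))"
  proof (intro allI impI)
    fix n :: nat assume n1: "1 \<le> n"
    define Gm where "Gm = G (n - 1) (n - 1)"
    define Gi where "Gi = minv Gm"
    define Gn where "Gn = G n n"
    define Lt where "Lt = transpose_mat (Lm i (int (n - 1)))"
    define N where "N = Nm i n"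
    have cGm: "Gm \<in> carrier_mat n n" unfolding Gm_def using G_dim[of "n - 1" "n - 1"] n1 by simp
    have invGm: "invertible_mat Gm" unfolding Gm_def by (rule G_inv)
    note mp = minv_props[OF invGm cGm, folded Gi_def]
    have cGn: "Gn \<in> carrier_mat (n + 1) (n + 1)" unfolding Gn_def using G_dim[of n n] by simp
    have cLt: "Lt \<in> carrier_mat (n + 1) n" unfolding Lt_def using Lm_carrier[of i "n - 1"] n1 by auto
    have cN: "N \<in> carrier_mat n n" unfolding N_def by (rule Nm_carrier)
    have Bi: "B i n \<in> carrier_mat (n + 1) n" using B_dim i n1 by auto
    have cGL: "Gn * Lt \<in> carrier_mat (n + 1) n" using cGn cLt by auto
    have ainv: "Ainv G i (n - 1) = Gn * Lt * Gi" unfolding Ainv_def Gn_def Lt_def Gi_def Gm_def using n1 by simp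
    have "Ainv G i (n - 1) * Gm = Gn * Lt" 
    proof -
      have "Gn * Lt * Gi * Gm = (Gn * Lt) * (Gi * Gm)" by (rule assoc_mult_mat[OF cGL mp(1) cGm])
      also have "\<dots> = Gn * Lt" using mp right_mult_one_mat[OF cGL] by simp
      finally show ?thesis unfolding ainv .
    qed
    then have R: "Ainv G i (n - 1) * Gm * N * Gi = Gn * Lt * N * Gi" by simp
    have "B i n = Gn * Lt * N * Gi"
    proof (rule cancel_right[OF invGm cGm Bi])
      show "Gn * Lt * N * Gi \<in> carrier_mat (n + 1) n" using cGL cN mp by auto
      have cGLN: "Gn * Lt * N \<in> carrier_mat (n + 1) n" using cGL cN by auto
      have "Gn * Lt * N * Gi * Gm = (Gn * Lt * N) * (Gi * Gm)" by (rule assoc_mult_mat[OF cGLN mp(1) cGm])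
      also have "\<dots> = Gn * Lt * N" using mp right_mult_one_mat[OF cGLN] by simp
      also have "\<dots> = B i n * Gm" unfolding Gn_def Lt_def N_def Gm_def using BG[OF n1] by simp
      finally show "B i n * Gm = Gn * Lt * N * Gi * Gm" by simp
    qed
    then show "B i n = Ainv G i (n - 1) * G (n - 1) (n - 1) * Nm i n * minv (G (n - 1) (n - 1))"
      using R unfolding Gm_def Gi_def N_def by simp
  qed
  have part3: "\<forall>n\<ge>3. C i n = G n (n - 2) * minv (G (n - 2) (n - 2)) * B i (n - 2)
                      - B i n * G (n - 1) (n - 3) * minv (G (n - 3) (n - 3))"
  proof (intro allI impI)
    fix n :: nat assume n3: "3 \<le> n"
    define X where "X = G n (n - 2)"
    define Y where "Y = G (n - 2) (n - 2)"
    define Yi where "Yi = minv Y"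
    define Bp where "Bp = B i (n - 2)"
    define Bn where "Bn = B i n"
    define G' where "G' = G (n - 1) (n - 3)"
    define Z where "Z = G (n - 3) (n - 3)"
    define Zi where "Zi = minv Z"
    define Cn where "Cn = C i n"
    define Lt where "Lt = transpose_mat (Lm i (int (n - 3)))"
    define N where "N = Nm i (n - 2)"
    have cX: "X \<in> carrier_mat (n + 1) (n - 1)" unfolding X_def using G_dim[of "n - 2" n] n3 by auto
    have cY: "Y \<in> carrier_mat (n - 1) (n - 1)" unfolding Y_def using G_dim[of "n - 2" "n - 2"] n3 by auto
    have invY: "invertible_mat Y" unfolding Y_def by (rule G_inv)
    note mY = minv_props[OF invY cY, folded Yi_def]
    have sn: "Suc (n - 2) = n - 1" using n3 by arith
    have sn2: "Suc (n - 3) = n - 2" using n3 by arith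
    have cBp: "Bp \<in> carrier_mat (n - 1) (n - 2)" unfolding Bp_def using B_dim[OF i, of "n - 2"] n3 sn by auto
    have cBn: "Bn \<in> carrier_mat (n + 1) n" unfolding Bn_def using B_dim[OF i, of n] n3 by auto
    have cG': "G' \<in> carrier_mat n (n - 2)" unfolding G'_def using G_dim[of "n - 3" "n - 1"] n3 sn sn2 by auto
    have cZ: "Z \<in> carrier_mat (n - 2) (n - 2)" unfolding Z_def using G_dim[of "n - 3" "n - 3"] n3 sn sn2 by auto
    have invZ: "invertible_mat Z" unfolding Z_def by (rule G_inv)
    note mZ = minv_props[OF invZ cZ, folded Zi_def]
    have cCn: "Cn \<in> carrier_mat (n + 1) (n - 2)" unfolding Cn_def using C_dim[OF i, of n] n3 by auto
    have cLt: "Lt \<in> carrier_mat (n - 1) (n - 2)" unfolding Lt_def using Lm_carrier[of i "n - 3"] n3 by auto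
    have cN: "N \<in> carrier_mat (n - 2) (n - 2)" unfolding N_def by (rule Nm_carrier)
    have h1: "Bn * G' + Cn * Z = X * Lt * N"
    proof -
      have "B i n * G (n - 1) (n - 3) + C i n * Gz G (int n - 3) (int (n - 3)) = G n (n - 3 + 1) * transpose_mat (Lm i (int (n - 3))) * Nm i (n - 3 + 1)"
        by (rule V) (use n3 in auto)
      moreover have "Gz G (int n - 3) (int (n - 3)) = Z" unfolding Z_def using n3 by (simp add: Gz_in nat_diff_distrib)
      moreover have "n - 3 + 1 = n - 2" using n3 by simp
      ultimately show ?thesis unfolding Bn_def G'_def Cn_def X_def Lt_def N_def by simp
    qed
    have h2: "Bp * Z = Y * Lt * N"
    proof -
      have "B i (n - 2) * G (n - 2 - 1) (n - 2 - 1) = G (n - 2) (n - 2) * transpose_mat (Lm i (int (n - 2 - 1))) * Nm i (n - 2)"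
        by (rule BG) (use n3 in auto)
      moreover have "n - 2 - 1 = n - 3" by simp
      ultimately show ?thesis unfolding Bp_def Z_def Y_def Lt_def N_def by simp
    qed
    have cYL: "Y * Lt \<in> carrier_mat (n - 1) (n - 2)" using cY cLt by auto
    have cXYi: "X * Yi \<in> carrier_mat (n + 1) (n - 1)" using cX mY by auto
    have cXYiBp: "X * Yi * Bp \<in> carrier_mat (n + 1) (n - 2)" using cXYi cBp by auto
    have cBG: "Bn * G' \<in> carrier_mat (n + 1) (n - 2)" using cBn cG' by auto
    have cBGZi: "Bn * G' * Zi \<in> carrier_mat (n + 1) (n - 2)" using cBG mZ by auto
    have e1: "X * Yi * Bp * Z = X * Lt * N"
    proof -
      have "X * Yi * Bp * Z = (X * Yi) * (Bp * Z)" by (rule assoc_mult_mat[OF cXYi cBp cZ])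
      also have "\<dots> = (X * Yi) * (Y * Lt * N)" unfolding h2 ..
      also have "\<dots> = ((X * Yi) * (Y * Lt)) * N" by (rule assoc_mult_mat[symmetric, OF cXYi cYL cN])
      also have "(X * Yi) * (Y * Lt) = X * (Yi * (Y * Lt))" by (rule assoc_mult_mat[OF cX mY(1) cYL])
      also have "Yi * (Y * Lt) = (Yi * Y) * Lt" by (rule assoc_mult_mat[symmetric, OF mY(1) cY cLt])
      also have "\<dots> = Lt" using mY left_mult_one_mat[OF cLt] by simp
      finally show ?thesis .
    qed
    have e2: "Bn * G' * Zi * Z = Bn * G'"
    proof -
      have "Bn * G' * Zi * Z = (Bn * G') * (Zi * Z)" by (rule assoc_mult_mat[OF cBG mZ(1) cZ])
      also have "\<dots> = Bn * G'" using mZ right_mult_one_mat[OF cBG] by simp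
      finally show ?thesis .
    qed
    have "Cn = X * Yi * Bp - Bn * G' * Zi"
    proof (rule cancel_right[OF invZ cZ cCn])
      show "X * Yi * Bp - Bn * G' * Zi \<in> carrier_mat (n + 1) (n - 2)" by (rule minus_carrier_mat[OF cBGZi])
      have "(X * Yi * Bp - Bn * G' * Zi) * Z = X * Yi * Bp * Z - Bn * G' * Zi * Z"
        by (rule minus_mult_distrib_mat[OF cXYiBp cBGZi cZ])
      also have "\<dots> = X * Lt * N - Bn * G'" unfolding e1 e2 ..
      also have "\<dots> = Cn * Z" using add_to_minus[OF cBG _ h1] cCn cZ by auto
      finally show "Cn * Z = (X * Yi * Bp - Bn * G' * Zi) * Z" by simp
    qed
    then show "C i n = G n (n - 2) * minv (G (n - 2) (n - 2)) * B i (n - 2)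
                      - B i n * G (n - 1) (n - 3) * minv (G (n - 3) (n - 3))"
      unfolding Cn_def X_def Yi_def Y_def Bp_def Bn_def G'_def Zi_def Z_def .
  qed
  have AG: "A i m * G (m + 1) (m + 1) = G m m * Lm i (int m)" for m
  proof -
    have h: "A i m * Gz G (int m + 1) (int (m + 1)) + transpose_mat (Az A i (int m - 1)) * Gz G (int m - 1) (int (m + 1))
       = Gz G (int m) (int (m + 1) - 1) * Lm i (int (m + 1) - 1)" by (rule P4) auto
    have g1: "Gz G (int m + 1) (int (m + 1)) = G (m + 1) (m + 1)" by (simp add: Gz_in nat_add_distrib)
    have g2: "Gz G (int m - 1) (int (m + 1)) = 0\<^sub>m m (m + 2)" by (simp add: Gz_out nat_add_distrib)
    have g3: "Gz G (int m) (int (m + 1) - 1) = G m m" by (simp add: Gz_in)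
    have cAz: "transpose_mat (Az A i (int m - 1)) \<in> carrier_mat (m + 1) m" using Az_carrier[OF A_dim i, where n=m] by auto
    have cAG: "A i m * G (m + 1) (m + 1) \<in> carrier_mat (m + 1) (m + 2)" using A_dim[OF i, of m] G_dim[of "m + 1" "m + 1"] by auto
    have z: "transpose_mat (Az A i (int m - 1)) * 0\<^sub>m m (m + 2) = 0\<^sub>m (m + 1) (m + 2)" using cAz by auto
    show ?thesis using h cAG unfolding g1 g2 g3 z by simp
  qed
  have part2: "\<forall>n\<ge>3. transpose_mat (C i n)
          = A i (n - 3) * A i (n - 2) * A i (n - 1) * G n n * Km a40 a22 a04 i n * minv (G n n)"
  proof (intro allI impI)
    fix n :: nat assume n3: "3 \<le> n"
    have n1: "1 \<le> n" using n3 by simp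
    have sn: "Suc (n - 2) = n - 1" "Suc (n - 3) = n - 2" "Suc (n - 1) = n" "n - 3 + 1 = n - 2" "n - 2 + 1 = n - 1" "n - 1 + 1 = n"
      using n3 by arith+
    define A3 where "A3 = A i (n - 3)"
    define A2 where "A2 = A i (n - 2)"
    define A1 where "A1 = A i (n - 1)"
    define Gn where "Gn = G n n"
    define K where "K = Km a40 a22 a04 i n"
    define Gi where "Gi = minv Gn"
    define G3 where "G3 = G (n - 3) (n - 3)"
    define G2 where "G2 = G (n - 2) (n - 2)"
    define G1 where "G1 = G (n - 1) (n - 1)"
    define L3 where "L3 = Lm i (int (n - 3))"
    define L2 where "L2 = Lm i (int (n - 2))"
    define L1 where "L1 = Lm i (int (n - 1))"
    have cA3: "A3 \<in> carrier_mat (n - 2) (n - 1)" unfolding A3_def using A_dim[OF i, of "n - 3"] sn by auto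
    have cA2: "A2 \<in> carrier_mat (n - 1) n" unfolding A2_def using A_dim[OF i, of "n - 2"] sn n3 by auto
    have cA1: "A1 \<in> carrier_mat n (n + 1)" unfolding A1_def using A_dim[OF i, of "n - 1"] sn n3 by auto
    have cGn: "Gn \<in> carrier_mat (n + 1) (n + 1)" unfolding Gn_def using G_dim[of n n] by auto
    have cK: "K \<in> carrier_mat (n + 1) (n + 1)" unfolding K_def by (rule Km_carrier)
    have invGn: "invertible_mat Gn" unfolding Gn_def by (rule G_inv)
    note mG = minv_props[OF invGn cGn, folded Gi_def]
    have cG3: "G3 \<in> carrier_mat (n - 2) (n - 2)" unfolding G3_def using G_dim[of "n - 3" "n - 3"] sn by auto
    have cG2: "G2 \<in> carrier_mat (n - 1) (n - 1)" unfolding G2_def using G_dim[of "n - 2" "n - 2"] sn by auto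
    have cG1: "G1 \<in> carrier_mat n n" unfolding G1_def using G_dim[of "n - 1" "n - 1"] sn by auto
    have cL3: "L3 \<in> carrier_mat (n - 2) (n - 1)"
    proof -
      have e: "n - 3 + 1 = n - 2" "n - 3 + 2 = n - 1" using n3 by arith+
      show ?thesis unfolding L3_def using Lm_carrier[of i "n - 3"] unfolding e .
    qed
    have cL2: "L2 \<in> carrier_mat (n - 1) (n)"
    proof -
      have e: "n - 2 + 1 = n - 1" "n - 2 + 2 = n" using n3 by arith+
      show ?thesis unfolding L2_def using Lm_carrier[of i "n - 2"] unfolding e .
    qed
    have cL1: "L1 \<in> carrier_mat (n) (n + 1)"
    proof -
      have e: "n - 1 + 1 = n" "n - 1 + 2 = n + 1" using n3 by arith+
      show ?thesis unfolding L1_def using Lm_carrier[of i "n - 1"] unfolding e .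
    qed
    have ag1: "A1 * Gn = G1 * L1" unfolding A1_def Gn_def G1_def L1_def using AG[of "n - 1"] sn by simp
    have ag2: "A2 * G1 = G2 * L2" unfolding A2_def G1_def G2_def L2_def using AG[of "n - 2"] sn by simp
    have ag3: "A3 * G2 = G3 * L3" unfolding A3_def G3_def G2_def L3_def using AG[of "n - 3"] sn by simp
    have cA32: "A3 * A2 \<in> carrier_mat (n - 2) n" using cA3 cA2 by auto
    have chain: "A3 * A2 * A1 * Gn = G3 * L3 * L2 * L1"
    proof -
      have "A3 * A2 * A1 * Gn = (A3 * A2) * (A1 * Gn)" by (rule assoc_mult_mat[OF cA32 cA1 cGn])
      also have "\<dots> = (A3 * A2) * (G1 * L1)" unfolding ag1 ..
      also have "\<dots> = ((A3 * A2) * G1) * L1" by (rule assoc_mult_mat[symmetric, OF cA32 cG1 cL1])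
      also have "(A3 * A2) * G1 = A3 * (A2 * G1)" by (rule assoc_mult_mat[OF cA3 cA2 cG1])
      also have "\<dots> = A3 * (G2 * L2)" unfolding ag2 ..
      also have "\<dots> = (A3 * G2) * L2" by (rule assoc_mult_mat[symmetric, OF cA3 cG2 cL2])
      also have "\<dots> = G3 * L3 * L2" unfolding ag3 ..
      finally show ?thesis .
    qed
    define sh :: nat where "sh = (if i = 1 then 0 else 1)"
    have r1: "L1 * K = mat n (n + 1) (\<lambda>(b, e). K $$ (b + sh, e))"
      unfolding L1_def sh_def using rowsel[of K "n - 1" "n + 1" i] cK i sn by auto
    have r2: "L2 * (L1 * K) = mat (n - 1) (n + 1) (\<lambda>(b, e). K $$ (b + 2 * sh, e))"
    proof -
      have "L2 * (L1 * K) = mat (n - 2 + 1) (n + 1) (\<lambda>(b, e). (L1 * K) $$ (b + sh, e))"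
        unfolding L2_def sh_def using rowsel[of "L1 * K" "n - 2" "n + 1" i] cK cL1 i sn by auto
      also have "\<dots> = mat (n - 1) (n + 1) (\<lambda>(b, e). K $$ (b + 2 * sh, e))"
        unfolding r1 using sn by (intro eq_matI) (auto simp: sh_def)
      finally show ?thesis .
    qed
    have r3: "L3 * (L2 * (L1 * K)) = mat (n - 2) (n + 1) (\<lambda>(b, e). K $$ (b + 3 * sh, e))"
    proof -
      have "L3 * (L2 * (L1 * K)) = mat (n - 3 + 1) (n + 1) (\<lambda>(b, e). (L2 * (L1 * K)) $$ (b + sh, e))"
        unfolding L3_def sh_def using rowsel[of "L2 * (L1 * K)" "n - 3" "n + 1" i] cK cL1 cL2 i sn by auto
      also have "\<dots> = mat (n - 2) (n + 1) (\<lambda>(b, e). K $$ (b + 3 * sh, e))"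
        unfolding r2 using sn by (intro eq_matI) (auto simp: sh_def add.commute)
      finally show ?thesis .
    qed
    define E where "E = mat (n - 2) (n + 1) (\<lambda>(b, e). K $$ (b + 3 * sh, e))"
    have cE: "E \<in> carrier_mat (n - 2) (n + 1)" unfolding E_def by simp
    have cL1K: "L1 * K \<in> carrier_mat n (n + 1)" using cL1 cK by auto
    have cL2L1K: "L2 * (L1 * K) \<in> carrier_mat (n - 1) (n + 1)" using cL2 cL1K by auto
    have cG3L3: "G3 * L3 \<in> carrier_mat (n - 2) (n - 1)" using cG3 cL3 by auto
    have cG3L3L2: "G3 * L3 * L2 \<in> carrier_mat (n - 2) n" using cG3L3 cL2 by auto
    have rhs: "A3 * A2 * A1 * Gn * K * Gi = G3 * (E * Gi)"
    proof -
      have "A3 * A2 * A1 * Gn * K = G3 * L3 * L2 * L1 * K" unfolding chain ..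
      also have "\<dots> = (G3 * L3 * L2) * (L1 * K)" by (rule assoc_mult_mat[OF cG3L3L2 cL1 cK])
      also have "\<dots> = (G3 * L3) * (L2 * (L1 * K))" by (rule assoc_mult_mat[OF cG3L3 cL2 cL1K])
      also have "\<dots> = G3 * (L3 * (L2 * (L1 * K)))" by (rule assoc_mult_mat[OF cG3 cL3 cL2L1K])
      also have "\<dots> = G3 * E" unfolding r3 E_def ..
      finally have "A3 * A2 * A1 * Gn * K * Gi = G3 * E * Gi" by simp
      also have "\<dots> = G3 * (E * Gi)" by (rule assoc_mult_mat[OF cG3 cE mG(1)])
      finally show ?thesis .
    qed
    have cEGi: "E * Gi \<in> carrier_mat (n - 2) (n + 1)" using cE mG by auto
    have EGi: "(E * Gi) $$ (b, j) = (if i = 1 then 4 * a40 * Gi $$ (b, j) + 2 * a22 * Gi $$ (b + 2, j)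
                 else 4 * a04 * Gi $$ (b + 3, j) + 2 * a22 * Gi $$ (b + 1, j))" if b: "b < n - 2" and j: "j < n + 1" for b j
    proof -
      have "(E * Gi) $$ (b, j) = (\<Sum>e<n + 1. E $$ (b, e) * Gi $$ (e, j))" by (rule mm[OF cE mG(1) b j])
      also have "\<dots> = (\<Sum>e<n + 1. K $$ (b + 3 * sh, e) * Gi $$ (e, j))"
        unfolding E_def using b by (intro sum.cong refl) auto
      also have "\<dots> = (if i = 1 then 4 * a40 * Gi $$ (b, j) + 2 * a22 * Gi $$ (b + 2, j)
                 else 4 * a04 * Gi $$ (b + 3, j) + 2 * a22 * Gi $$ (b + 1, j))"
      proof (cases "i = 1")
        case True
        have "(\<Sum>e<n + 1. K $$ (b + 3 * sh, e) * Gi $$ (e, j)) = (\<Sum>e<n + 1. (if e = b then 4 * a40 else if e = b + 2 then 2 * a22 else 0) * Gi $$ (e, j))"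
          using b True unfolding K_def sh_def by (intro sum.cong refl) (auto simp: Km_index)
        also have "\<dots> = 4 * a40 * Gi $$ (b, j) + 2 * a22 * Gi $$ (b + 2, j)" using b by (intro two_delta) auto
        finally show ?thesis using True by simp
      next
        case False
        then have i2: "i = 2" using i by auto
        have "(\<Sum>e<n + 1. K $$ (b + 3 * sh, e) * Gi $$ (e, j)) = (\<Sum>e<n + 1. (if e = b + 3 then 4 * a04 else if e = b + 1 then 2 * a22 else 0) * Gi $$ (e, j))"
          using b i2 unfolding K_def sh_def by (intro sum.cong refl) (auto simp: Km_index)
        also have "\<dots> = 4 * a04 * Gi $$ (b + 3, j) + 2 * a22 * Gi $$ (b + 1, j)" using b by (intro two_delta) auto
        finally show ?thesis using i2 by simp
      qed
      finally show ?thesis .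
    qed
    have cC: "C i n \<in> carrier_mat (n + 1) (n - 2)" using C_dim[OF i n1] .
    have "transpose_mat (C i n) = G3 * (E * Gi)"
    proof (rule eq_matI)
      show "dim_row (transpose_mat (C i n)) = dim_row (G3 * (E * Gi))" using cC cG3 by simp
      show "dim_col (transpose_mat (C i n)) = dim_col (G3 * (E * Gi))" using cC mG(1) by (simp add: carrier_matD)
      fix c j assume c: "c < dim_row (G3 * (E * Gi))" and j: "j < dim_col (G3 * (E * Gi))"
      have c': "c < n - 2" and j': "j < n + 1" using c j cG3 cEGi by auto
      have "(G3 * (E * Gi)) $$ (c, j) = (\<Sum>b<n - 2. G3 $$ (c, b) * (E * Gi) $$ (b, j))" by (rule mm[OF cG3 cEGi c' j'])
      also have "\<dots> = (\<Sum>b<n - 2. G3 $$ (c, b) * (if i = 1 then 4 * a40 * Gi $$ (b, j) + 2 * a22 * Gi $$ (b + 2, j)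
                 else 4 * a04 * Gi $$ (b + 3, j) + 2 * a22 * Gi $$ (b + 1, j)))"
        using j' by (intro sum.cong refl) (auto simp: EGi)
      finally have R: "(G3 * (E * Gi)) $$ (c, j) = \<dots>" .
      have B1: "B 1 n \<in> carrier_mat (n + 1) n" and C1: "C 1 n \<in> carrier_mat (n + 1) (n - 2)"
        and B2: "B 2 n \<in> carrier_mat (n + 1) n" and C2: "C 2 n \<in> carrier_mat (n + 1) (n - 2)"
        using B_dim C_dim n1 by auto
      have jn: "j \<le> n" and cn: "c \<le> n - 3" using j' c' by auto
      have sumeq: "(\<Sum>l\<le>n - 3. f l) = (\<Sum>b<n - 2. f b)" for f :: "nat \<Rightarrow> real"
        using sn by (simp add: lessThan_Suc_atMost[symmetric])
      have L: "transpose_mat (C i n) $$ (c, j) = C i n $$ (j, c)" using cC c' j' by simp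
      show "transpose_mat (C i n) $$ (c, j) = (G3 * (E * Gi)) $$ (c, j)"
      proof (cases "i = 1")
        case True
        have "C 1 n $$ (j, c) = (\<Sum>l\<le>n - 3. G (n - 3) (n - 3) $$ (c, l) * (4 * a40 * minv (G n n) $$ (l, j) + 2 * a22 * minv (G n n) $$ (l + 2, j)))"
          by (rule O.C_formula_x[OF n3 jn cn struct_entry[OF struct_x[OF n1] B1 C1 jn]])
        moreover have "(\<Sum>l\<le>n - 3. G (n - 3) (n - 3) $$ (c, l) * (4 * a40 * minv (G n n) $$ (l, j) + 2 * a22 * minv (G n n) $$ (l + 2, j)))
          = (\<Sum>b<n - 2. G3 $$ (c, b) * (4 * a40 * Gi $$ (b, j) + 2 * a22 * Gi $$ (b + 2, j)))"
          unfolding G3_def Gi_def Gn_def by (rule sumeq)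
        moreover have "(\<Sum>b<n - 2. G3 $$ (c, b) * (if i = 1 then 4 * a40 * Gi $$ (b, j) + 2 * a22 * Gi $$ (b + 2, j)
                 else 4 * a04 * Gi $$ (b + 3, j) + 2 * a22 * Gi $$ (b + 1, j)))
           = (\<Sum>b<n - 2. G3 $$ (c, b) * (4 * a40 * Gi $$ (b, j) + 2 * a22 * Gi $$ (b + 2, j)))"
          using True by simp
        ultimately show ?thesis unfolding L R using True by simp
      next
        case False
        then have i2: "i = 2" using i by auto
        have "C 2 n $$ (j, c) = (\<Sum>l\<le>n - 3. G (n - 3) (n - 3) $$ (c, l) * (4 * a04 * minv (G n n) $$ (l + 3, j) + 2 * a22 * minv (G n n) $$ (l + 1, j)))"
          by (rule O.C_formula_y[OF n3 jn cn struct_entry[OF struct_y[OF n1] B2 C2 jn]])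
        moreover have "(\<Sum>l\<le>n - 3. G (n - 3) (n - 3) $$ (c, l) * (4 * a04 * minv (G n n) $$ (l + 3, j) + 2 * a22 * minv (G n n) $$ (l + 1, j)))
          = (\<Sum>b<n - 2. G3 $$ (c, b) * (4 * a04 * Gi $$ (b + 3, j) + 2 * a22 * Gi $$ (b + 1, j)))"
          unfolding G3_def Gi_def Gn_def by (rule sumeq)
        moreover have "(\<Sum>b<n - 2. G3 $$ (c, b) * (if i = 1 then 4 * a40 * Gi $$ (b, j) + 2 * a22 * Gi $$ (b + 2, j)
                 else 4 * a04 * Gi $$ (b + 3, j) + 2 * a22 * Gi $$ (b + 1, j)))
           = (\<Sum>b<n - 2. G3 $$ (c, b) * (4 * a04 * Gi $$ (b + 3, j) + 2 * a22 * Gi $$ (b + 1, j)))"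
          using i2 by simp
        ultimately show ?thesis unfolding L R using i2 by simp
      qed
    qed
    then show "transpose_mat (C i n) = A i (n - 3) * A i (n - 2) * A i (n - 1) * G n n * Km a40 a22 a04 i n * minv (G n n)"
      using rhs unfolding A3_def A2_def A1_def Gn_def K_def Gi_def by simp
  qed
  show ?thesis by (rule conjI[OF part1 conjI[OF part2 conjI[OF part3 conjI[OF part4 part5]]]])
qed


end
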